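(* Let $\alpha$ be a continuous rotationally symmetric norm and $n\ge1$. Then \[H^{\alpha}=M_{\alpha}(z^n)\oplus zM_{\alpha}(z^n)\oplus\cdots\oplus z^{n-1}M_{\alpha}(z^n),\] where $\oplus$ is the algebraic direct sum.
   Context: $\mathbb T$ is the unit circle with normalized Lebesgue measure $m$. A norm $\alpha$ on $L^\infty$ is rotationally symmetric if $\alpha(1)=1$, $\alpha(|f|)=\alpha(f)$, and $\alpha(f_w)=\alpha(f)$ for all $f\in L^\infty$, $w\in\mathbb T$, where $f_w(z)=f(\overline w z)$; it is continuous if $\alpha(\chi_E)\to0$ as $m(E)\to0^+$. It is extended to measurable $f$ by $\alpha(f)=\sup\{\alpha(s): s\text{ simple},0\le s\le|f|\}$. $H^\alpha$ is the $\alpha$-closure of $H^\infty$. $H^\infty(z^n)=\{g(z^n): g\in H^\infty\}$ and $M_\alpha(z^n)$ is its $\alpha$-closure. *)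

theory Defs
  imports "HOL-Analysis.Analysis"
begin

text \<open>Normalized Lebesgue measure m on the unit circle T, realised as a probability
  measure on the complex plane (Borel sets) concentrated on T: the push-forward of the
  uniform distribution on [0, 2 pi) under t |-> cis t.  Functions on T are modelled as
  functions complex => complex; only their values on T (up to m-null sets) matter.\<close>
definition circ :: "complex measure" where
  "circ = distr (uniform_measure lborel {0..<2*pi}) borel cis"

definition Linf :: "(complex \<Rightarrow> complex) set" where
  "Linf = {f \<in> borel_measurable circ. \<exists>C. AE z in circ. cmod (f z) \<le> C}"

definition rot :: "complex \<Rightarrow> (complex \<Rightarrow> complex) \<Rightarrow> (complex \<Rightarrow> complex)" where
  "rot w f = (\<lambda>z. f (cnj w * z))"

text \<open>alpha is a norm on L^infinity (respecting a.e. equality, i.e. well defined on classes).\<close>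
definition Linf_norm :: "((complex \<Rightarrow> complex) \<Rightarrow> real) \<Rightarrow> bool" where
  "Linf_norm \<alpha> \<longleftrightarrow>
     (\<forall>f\<in>Linf. \<forall>g\<in>Linf. (AE z in circ. f z = g z) \<longrightarrow> \<alpha> f = \<alpha> g) \<and>
     (\<forall>f\<in>Linf. 0 \<le> \<alpha> f) \<and>
     (\<forall>f\<in>Linf. \<alpha> f = 0 \<longrightarrow> (AE z in circ. f z = 0)) \<and>
     (\<forall>f\<in>Linf. \<forall>c::complex. \<alpha> (\<lambda>z. c * f z) = cmod c * \<alpha> f) \<and>
     (\<forall>f\<in>Linf. \<forall>g\<in>Linf. \<alpha> (\<lambda>z. f z + g z) \<le> \<alpha> f + \<alpha> g)"

definition rot_sym_norm :: "((complex \<Rightarrow> complex) \<Rightarrow> real) \<Rightarrow> bool" where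
  "rot_sym_norm \<alpha> \<longleftrightarrow> Linf_norm \<alpha> \<and>
     \<alpha> (\<lambda>z. 1) = 1 \<and>
     (\<forall>f\<in>Linf. \<alpha> (\<lambda>z. complex_of_real (cmod (f z))) = \<alpha> f) \<and>
     (\<forall>f\<in>Linf. \<forall>w. cmod w = 1 \<longrightarrow> \<alpha> (rot w f) = \<alpha> f)"

definition continuous_norm :: "((complex \<Rightarrow> complex) \<Rightarrow> real) \<Rightarrow> bool" where
  "continuous_norm \<alpha> \<longleftrightarrow>
     (\<forall>\<epsilon>>0. \<exists>\<delta>>0. \<forall>E\<in>sets circ. 0 < measure circ E \<and> measure circ E < \<delta> \<longrightarrow>
        \<alpha> (indicator E) < \<epsilon>)"

definition alpha_ext :: "((complex \<Rightarrow> complex) \<Rightarrow> real) \<Rightarrow> (complex \<Rightarrow> complex) \<Rightarrow> ereal" where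
  "alpha_ext \<alpha> f = (SUP s \<in> {s :: complex \<Rightarrow> real. simple_function circ s \<and>
        (\<forall>z. 0 \<le> s z \<and> s z \<le> cmod (f z))}. ereal (\<alpha> (\<lambda>z. complex_of_real (s z))))"

definition alpha_closure :: "((complex \<Rightarrow> complex) \<Rightarrow> real) \<Rightarrow> (complex \<Rightarrow> complex) set
     \<Rightarrow> (complex \<Rightarrow> complex) set" where
  "alpha_closure \<alpha> S = {f \<in> borel_measurable circ. \<exists>h. (\<forall>k. h k \<in> S) \<and>
       (\<lambda>k. alpha_ext \<alpha> (\<lambda>z. f z - h k z)) \<longlonglongrightarrow> 0}"

text \<open>H^infinity: elements of L^infinity whose Fourier coefficients of negative index vanish.\<close>
definition Hinf :: "(complex \<Rightarrow> complex) set" where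
  "Hinf = {f \<in> Linf. \<forall>k::nat. k \<ge> 1 \<longrightarrow> integral\<^sup>L circ (\<lambda>z. f z * z ^ k) = 0}"

definition Hinf_pow :: "nat \<Rightarrow> (complex \<Rightarrow> complex) set" where
  "Hinf_pow n = {(\<lambda>z. g (z ^ n)) | g. g \<in> Hinf}"

definition H_alpha :: "((complex \<Rightarrow> complex) \<Rightarrow> real) \<Rightarrow> (complex \<Rightarrow> complex) set" where
  "H_alpha \<alpha> = alpha_closure \<alpha> Hinf"

definition M_alpha :: "((complex \<Rightarrow> complex) \<Rightarrow> real) \<Rightarrow> nat \<Rightarrow> (complex \<Rightarrow> complex) set" where
  "M_alpha \<alpha> n = alpha_closure \<alpha> (Hinf_pow n)"

end

theory Submission
  imports Defs "HOL-Complex_Analysis.Cauchy_Integral_Theorem"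
begin

lemma per_int:
  fixes g :: "real \<Rightarrow> ennreal"
  assumes per: "\<And>x. g (x + 2*pi) = g x"
  shows "g (x + 2*pi * of_int k) = g x"
proof -
  have pn: "g (y + 2*pi*real m) = g y" for y m
    by (induction m) (auto simp: algebra_simps per[of "y + 2*pi*real m" for m, simplified algebra_simps])
  show ?thesis
  proof (cases "k \<ge> 0")
    case True
    then show ?thesis using pn[of x "nat k"] by simp
  next
    case False
    then have "g (x + 2*pi * of_int k + 2*pi*real (nat (-k))) = g (x + 2*pi * of_int k)" using pn by blast
    then show ?thesis using False by simp
  qed
qed

lemma shift_int:
  fixes f :: "real \<Rightarrow> ennreal"
  assumes [measurable]: "f \<in> borel_measurable borel"
  shows "(\<integral>\<^sup>+x. f x \<partial>lborel) = (\<integral>\<^sup>+x. f (t + x) \<partial>lborel)"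
  using nn_integral_real_affine[of f 1 t] by simp

lemma ind_shift: "indicator {a..<c} (t + (x::real)) = (indicator {a - t..<c - t} x :: ennreal)"
proof -
  have "(t + x \<in> {a..<c}) = (x \<in> {a - t..<c - t})" by auto
  then show ?thesis unfolding indicator_def by simp
qed

lemma K_shift:
  fixes g :: "real \<Rightarrow> ennreal"
  assumes [measurable]: "g \<in> borel_measurable borel" and per: "\<And>x. g (x + 2*pi) = g x"
  shows "(\<integral>\<^sup>+x. g x * indicator {b + 2*pi * of_int k..<b + 2*pi * of_int k + 2*pi} x \<partial>lborel)
       = (\<integral>\<^sup>+x. g x * indicator {b..<b+2*pi} x \<partial>lborel)"
proof -
  have "(\<integral>\<^sup>+x. g x * indicator {b + 2*pi * of_int k..<b + 2*pi * of_int k + 2*pi} x \<partial>lborel)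
      = (\<integral>\<^sup>+x. g (2*pi * of_int k + x) * indicator {b + 2*pi * of_int k..<b + 2*pi * of_int k + 2*pi} (2*pi * of_int k + x) \<partial>lborel)"
    by (rule shift_int) measurable
  also have "\<dots> = (\<integral>\<^sup>+x. g x * indicator {b..<b+2*pi} x \<partial>lborel)"
  proof -
    have "g (2*pi * of_int k + x) = g x" for x using per_int[of g, OF per, of x k] by (simp add: add.commute)
    then show ?thesis by (simp add: ind_shift)
  qed
  finally show ?thesis .
qed

lemma K_base:
  fixes g :: "real \<Rightarrow> ennreal"
  assumes [measurable]: "g \<in> borel_measurable borel" and per: "\<And>x. g (x + 2*pi) = g x"
    and b: "0 \<le> b" "b < 2*pi"
  shows "(\<integral>\<^sup>+x. g x * indicator {b..<b+2*pi} x \<partial>lborel)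
       = (\<integral>\<^sup>+x. g x * indicator {0..<2*pi} x \<partial>lborel)"
proof -
  have split1: "indicator {b..<b+2*pi} x = (indicator {b..<2*pi} x + indicator {2*pi..<2*pi+b} x :: ennreal)" for x
    using b by (auto simp: indicator_def)
  have split2: "indicator {0..<2*pi} x = (indicator {b..<2*pi} x + indicator {0..<b} x :: ennreal)" for x
    using b by (auto simp: indicator_def)
  have sh: "(\<integral>\<^sup>+x. g x * indicator {2*pi..<2*pi+b} x \<partial>lborel) = (\<integral>\<^sup>+x. g x * indicator {0..<b} x \<partial>lborel)"
  proof -
    have "(\<integral>\<^sup>+x. g x * indicator {2*pi..<2*pi+b} x \<partial>lborel)
      = (\<integral>\<^sup>+x. g (2*pi + x) * indicator {2*pi..<2*pi+b} (2*pi + x) \<partial>lborel)"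
      by (rule shift_int) measurable
    also have "\<dots> = (\<integral>\<^sup>+x. g x * indicator {0..<b} x \<partial>lborel)"
    proof -
      have "g (2*pi + x) = g x" for x using per[of x] by (simp add: add.commute)
      then show ?thesis by (simp add: ind_shift)
    qed
    finally show ?thesis .
  qed
  have "(\<integral>\<^sup>+x. g x * indicator {b..<b+2*pi} x \<partial>lborel)
     = (\<integral>\<^sup>+x. g x * indicator {b..<2*pi} x + g x * indicator {2*pi..<2*pi+b} x \<partial>lborel)"
    by (simp add: split1 distrib_left)
  also have "\<dots> = (\<integral>\<^sup>+x. g x * indicator {b..<2*pi} x \<partial>lborel) + (\<integral>\<^sup>+x. g x * indicator {2*pi..<2*pi+b} x \<partial>lborel)"
    by (rule nn_integral_add) auto
  also have "\<dots> = (\<integral>\<^sup>+x. g x * indicator {b..<2*pi} x \<partial>lborel) + (\<integral>\<^sup>+x. g x * indicator {0..<b} x \<partial>lborel)"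
    using sh by simp
  also have "\<dots> = (\<integral>\<^sup>+x. g x * indicator {b..<2*pi} x + g x * indicator {0..<b} x \<partial>lborel)"
    by (rule nn_integral_add[symmetric]) auto
  also have "\<dots> = (\<integral>\<^sup>+x. g x * indicator {0..<2*pi} x \<partial>lborel)"
    by (simp add: split2 distrib_left)
  finally show ?thesis .
qed

lemma K_all:
  fixes g :: "real \<Rightarrow> ennreal"
  assumes [measurable]: "g \<in> borel_measurable borel" and per: "\<And>x. g (x + 2*pi) = g x"
  shows "(\<integral>\<^sup>+x. g x * indicator {b..<b+2*pi} x \<partial>lborel)
       = (\<integral>\<^sup>+x. g x * indicator {0..<2*pi} x \<partial>lborel)"
proof -
  define k where "k = \<lfloor>b / (2*pi)\<rfloor>"
  define c where "c = b - 2*pi * of_int k"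
  have "of_int k \<le> b / (2*pi)" "b / (2*pi) < of_int k + 1" unfolding k_def by linarith+
  then have c: "0 \<le> c" "c < 2*pi" unfolding c_def using pi_gt_zero
    by (auto simp: field_simps)
  have "b = c + 2*pi * of_int k" unfolding c_def by simp
  then have "(\<integral>\<^sup>+x. g x * indicator {b..<b+2*pi} x \<partial>lborel)
     = (\<integral>\<^sup>+x. g x * indicator {c + 2*pi * of_int k..<c + 2*pi * of_int k + 2*pi} x \<partial>lborel)" by simp
  also have "\<dots> = (\<integral>\<^sup>+x. g x * indicator {c..<c+2*pi} x \<partial>lborel)"
    by (rule K_shift[OF assms])
  also have "\<dots> = (\<integral>\<^sup>+x. g x * indicator {0..<2*pi} x \<partial>lborel)"
    by (rule K_base[OF assms c])
  finally show ?thesis .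
qed


lemma ind_sum: "(\<Sum>k<n. indicator {2*pi*real k..<2*pi*real k+2*pi} (x::real)) = (indicator {0..<2*pi*real n} x :: ennreal)"
proof (induction n)
  case 0
  then show ?case by simp
next
  case (Suc n)
  have "indicator {0..<2*pi*real (Suc n)} x = (indicator {0..<2*pi*real n} x + indicator {2*pi*real n..<2*pi*real n+2*pi} x :: ennreal)"
  proof -
    have h: "0 \<le> 2*pi*real n" using pi_gt_zero by simp
    have e: "2*pi*real (Suc n) = 2*pi*real n + 2*pi" by (simp add: algebra_simps)
    have "x \<in> {0..<2*pi*real (Suc n)} \<longleftrightarrow> x \<in> {0..<2*pi*real n} \<or> x \<in> {2*pi*real n..<2*pi*real n+2*pi}"
      unfolding e atLeastLessThan_iff using h pi_gt_zero by (smt (verit))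
    moreover have "\<not> (x \<in> {0..<2*pi*real n} \<and> x \<in> {2*pi*real n..<2*pi*real n+2*pi})" by auto
    ultimately show ?thesis unfolding indicator_def by auto
  qed
  then show ?case using Suc by simp
qed

lemma per_main:
  fixes g :: "real \<Rightarrow> ennreal"
  assumes [measurable]: "g \<in> borel_measurable borel" and per: "\<And>x. g (x + 2*pi) = g x" and n: "n \<ge> 1"
  shows "(\<integral>\<^sup>+t. g (a + real n * t) * indicator {0..<2*pi} t \<partial>lborel)
       = (\<integral>\<^sup>+t. g t * indicator {0..<2*pi} t \<partial>lborel)"
proof -
  define K where "K = (\<integral>\<^sup>+t. g t * indicator {0..<2*pi} t \<partial>lborel)"
  define f where "f x = g (a + x) * indicator {0..<2*pi*real n} x" for x
  have fm[measurable]: "f \<in> borel_measurable borel" unfolding f_def by measurable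
  have "(\<integral>\<^sup>+x. f x \<partial>lborel) = ennreal \<bar>real n\<bar> * (\<integral>\<^sup>+x. f (0 + real n * x) \<partial>lborel)"
    by (rule nn_integral_real_affine) (use n in auto)
  also have "(\<integral>\<^sup>+x. f (0 + real n * x) \<partial>lborel) = (\<integral>\<^sup>+t. g (a + real n * t) * indicator {0..<2*pi} t \<partial>lborel)"
  proof -
    have "indicator {0..<2*pi*real n} (real n * x) = (indicator {0..<2*pi} x :: ennreal)" for x
      using n by (auto simp: indicator_def mult.commute zero_le_mult_iff)
    then show ?thesis by (simp add: f_def)
  qed
  finally have eq1: "(\<integral>\<^sup>+x. f x \<partial>lborel) = real n * (\<integral>\<^sup>+t. g (a + real n * t) * indicator {0..<2*pi} t \<partial>lborel)"
    by simp
  have "(\<integral>\<^sup>+x. f x \<partial>lborel) = (\<integral>\<^sup>+x. (\<Sum>k<n. g (a + x) * indicator {2*pi*real k..<2*pi*real k+2*pi} x) \<partial>lborel)"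
    unfolding f_def ind_sum[symmetric] sum_distrib_left by simp
  also have "\<dots> = (\<Sum>k<n. (\<integral>\<^sup>+x. g (a + x) * indicator {2*pi*real k..<2*pi*real k+2*pi} x \<partial>lborel))"
    by (rule nn_integral_sum) measurable
  also have "\<dots> = (\<Sum>k<n. K)"
  proof (rule sum.cong[OF refl])
    fix k assume "k \<in> {..<n}"
    have "(\<integral>\<^sup>+x. g x * indicator {a + 2*pi*real k..<a + 2*pi*real k + 2*pi} x \<partial>lborel)
        = (\<integral>\<^sup>+x. g (a + x) * indicator {a + 2*pi*real k..<a + 2*pi*real k + 2*pi} (a + x) \<partial>lborel)"
      by (rule shift_int) measurable
    also have "\<dots> = (\<integral>\<^sup>+x. g (a + x) * indicator {2*pi*real k..<2*pi*real k+2*pi} x \<partial>lborel)"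
      by (simp add: ind_shift)
    finally show "(\<integral>\<^sup>+x. g (a + x) * indicator {2*pi*real k..<2*pi*real k+2*pi} x \<partial>lborel) = K"
      unfolding K_def using K_all[OF assms(1) per, of "a + 2*pi*real k"] by simp
  qed
  also have "\<dots> = real n * K" by (simp add: ennreal_of_nat_eq_real_of_nat)
  finally have "real n * (\<integral>\<^sup>+t. g (a + real n * t) * indicator {0..<2*pi} t \<partial>lborel) = real n * K"
    using eq1 by simp
  then show ?thesis unfolding K_def using n by (simp add: ennreal_mult_cancel_left)
qed

definition U :: "real measure" where "U = uniform_measure lborel {0..<2*pi}"

lemma sets_U[simp, measurable_cong]: "sets U = sets borel" unfolding U_def by simp
lemma space_U[simp]: "space U = UNIV" unfolding U_def by simp
lemma measurable_U[simp]: "measurable U N = measurable borel N"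
  by (rule measurable_cong_sets) auto

lemma circ_U: "circ = distr U borel cis" unfolding circ_def U_def ..

lemma sets_circ[simp, measurable_cong]: "sets circ = sets borel"
  unfolding circ_def by simp

lemma space_circ[simp]: "space circ = UNIV"
  unfolding circ_def by simp

lemma measurable_circ1[simp]: "measurable circ N = measurable borel N"
  by (rule measurable_cong_sets) auto

lemma measurable_circ2[simp]: "measurable N circ = measurable N borel"
  by (rule measurable_cong_sets) auto

lemma cis_meas[measurable]: "cis \<in> borel_measurable borel"
  by (intro borel_measurable_continuous_onI continuous_intros)

lemma cnj_meas[measurable]: "cnj \<in> borel_measurable borel"
  by (intro borel_measurable_continuous_onI continuous_intros)

lemma emeasure_circ:
  assumes A: "A \<in> sets borel"
  shows "emeasure circ A = (\<integral>\<^sup>+t. indicator A (cis t) * indicator {0..<2*pi} t \<partial>lborel) / ennreal (2*pi)"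
proof -
  have cA: "cis -` A \<in> sets borel" by (rule measurable_sets_borel[OF cis_meas A])
  have "emeasure circ A = emeasure U (cis -` A \<inter> space U)"
    unfolding circ_U by (rule emeasure_distr) (use A in simp_all)
  also have "\<dots> = emeasure lborel ({0..<2*pi} \<inter> (cis -` A)) / emeasure lborel {0..<2*pi}"
    unfolding U_def using A cA by (subst emeasure_uniform_measure) auto
  also have "emeasure lborel ({0..<2*pi} \<inter> (cis -` A)) = (\<integral>\<^sup>+t. indicator ({0..<2*pi} \<inter> (cis -` A)) t \<partial>lborel)"
    using A cA by (subst nn_integral_indicator) auto
  also have "\<dots> = (\<integral>\<^sup>+t. indicator A (cis t) * indicator {0..<2*pi} t \<partial>lborel)"
    by (rule nn_integral_cong) (auto simp: indicator_def)
  also have "emeasure lborel {0..<2*pi} = ennreal (2*pi)" by simp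
  finally show ?thesis .
qed

lemma circ_inv:
  assumes c: "cmod c = 1" and n: "n \<ge> 1"
  shows "distr circ borel (\<lambda>z. c * z ^ n) = circ"
proof (rule measure_eqI)
  show "sets (distr circ borel (\<lambda>z. c * z ^ n)) = sets circ" by simp
  fix A assume "A \<in> sets (distr circ borel (\<lambda>z. c * z ^ n))"
  then have A[measurable]: "A \<in> sets borel" by simp
  define a where "a = Arg c"
  have "c \<noteq> 0" using c by auto
  then have ca: "c = cis a" unfolding a_def using c cis_Arg[of c] by (auto simp: sgn_div_norm)
  define g where "g x = (indicator A (cis x) :: ennreal)" for x
  have gm[measurable]: "g \<in> borel_measurable borel" unfolding g_def by measurable
  have gp: "g (x + 2*pi) = g x" for x unfolding g_def by (metis cis_mult cis_2pi mult_1_right)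
  have "emeasure (distr circ borel (\<lambda>z. c * z ^ n)) A = emeasure circ ((\<lambda>z. c * z ^ n) -` A \<inter> space circ)"
    by (rule emeasure_distr) auto
  also have "\<dots> = (\<integral>\<^sup>+t. indicator ((\<lambda>z. c * z ^ n) -` A) (cis t) * indicator {0..<2*pi} t \<partial>lborel) / ennreal (2*pi)"
    by (subst emeasure_circ) (auto intro!: measurable_sets_borel[OF _ A])
  also have "(\<integral>\<^sup>+t. indicator ((\<lambda>z. c * z ^ n) -` A) (cis t) * indicator {0..<2*pi} t \<partial>lborel)
      = (\<integral>\<^sup>+t. g (a + real n * t) * indicator {0..<2*pi} t \<partial>lborel)"
  proof -
    have "c * cis t ^ n = cis (a + real n * t)" for t
      by (simp only: ca Complex.DeMoivre cis_mult)
    then show ?thesis unfolding g_def by (simp add: indicator_def)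
  qed
  also have "\<dots> = (\<integral>\<^sup>+t. g t * indicator {0..<2*pi} t \<partial>lborel)"
    by (rule per_main[OF gm gp n])
  also have "\<dots> / ennreal (2*pi) = emeasure circ A"
    by (subst emeasure_circ) (auto simp: g_def)
  finally show "emeasure (distr circ borel (\<lambda>z. c * z ^ n)) A = emeasure circ A" .
qed

lemma emeasure_circ_UNIV: "emeasure circ UNIV = 1"
proof -
  have "emeasure circ UNIV = (\<integral>\<^sup>+t. indicator {0..<2*pi} t \<partial>lborel) / ennreal (2*pi)"
    by (subst emeasure_circ) auto
  also have "(\<integral>\<^sup>+t. indicator {0..<2*pi} t \<partial>lborel) = ennreal (2*pi)"
    by (subst nn_integral_indicator) auto
  finally show ?thesis using pi_gt_zero by (simp add: divide_ennreal)
qed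

lemma finite_circ: "finite_measure circ"
  by (rule finite_measureI) (simp add: emeasure_circ_UNIV)

lemma AE_circ_T: "AE z in circ. cmod z = 1"
  unfolding circ_U by (subst AE_distr_iff) auto

lemma Linf_I:
  assumes "f \<in> borel_measurable borel" "\<And>z. cmod (f z) \<le> C"
  shows "f \<in> Linf"
  using assms unfolding Linf_def by auto

lemma Linf_realI:
  assumes "t \<in> borel_measurable borel" "\<And>z. \<bar>t z\<bar> \<le> C"
  shows "(\<lambda>z. complex_of_real (t z)) \<in> Linf"
  by (rule Linf_I[of _ C]) (use assms in auto)

definition BT :: "(complex \<Rightarrow> complex) \<Rightarrow> (complex \<Rightarrow> real) set" where
  "BT F = {t. t \<in> borel_measurable borel \<and> (\<exists>B. \<forall>z. t z \<le> B) \<and> (\<forall>z. 0 \<le> t z \<and> t z \<le> cmod (F z))}"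

locale rsn =
  fixes \<alpha> :: "(complex \<Rightarrow> complex) \<Rightarrow> real"
  assumes rs: "rot_sym_norm \<alpha>"
begin

lemma ae_eq: "f \<in> Linf \<Longrightarrow> g \<in> Linf \<Longrightarrow> (AE z in circ. f z = g z) \<Longrightarrow> \<alpha> f = \<alpha> g"
  using rs unfolding rot_sym_norm_def Linf_norm_def by blast
lemma nonneg: "f \<in> Linf \<Longrightarrow> 0 \<le> \<alpha> f"
  using rs unfolding rot_sym_norm_def Linf_norm_def by blast
lemma zero_ae: "f \<in> Linf \<Longrightarrow> \<alpha> f = 0 \<Longrightarrow> AE z in circ. f z = 0"
  using rs unfolding rot_sym_norm_def Linf_norm_def by blast
lemma homog: "f \<in> Linf \<Longrightarrow> \<alpha> (\<lambda>z. c * f z) = cmod c * \<alpha> f"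
  using rs unfolding rot_sym_norm_def Linf_norm_def by blast
lemma triangle: "f \<in> Linf \<Longrightarrow> g \<in> Linf \<Longrightarrow> \<alpha> (\<lambda>z. f z + g z) \<le> \<alpha> f + \<alpha> g"
  using rs unfolding rot_sym_norm_def Linf_norm_def by blast
lemma one: "\<alpha> (\<lambda>z. 1) = 1"
  using rs unfolding rot_sym_norm_def by blast
lemma absinv: "f \<in> Linf \<Longrightarrow> \<alpha> (\<lambda>z. complex_of_real (cmod (f z))) = \<alpha> f"
  using rs unfolding rot_sym_norm_def by blast
lemma rotinv: "f \<in> Linf \<Longrightarrow> cmod w = 1 \<Longrightarrow> \<alpha> (rot w f) = \<alpha> f"
  using rs unfolding rot_sym_norm_def by blast

lemma const: "\<alpha> (\<lambda>z. c) = cmod c"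
proof -
  have "(\<lambda>z::complex. 1::complex) \<in> Linf" by (rule Linf_I[of _ 1]) auto
  from homog[OF this, of c] show ?thesis by (simp add: one)
qed

lemma mono:
  fixes u v :: "complex \<Rightarrow> real"
  assumes um[measurable]: "u \<in> borel_measurable borel" and vm[measurable]: "v \<in> borel_measurable borel"
    and vb: "\<And>z. v z \<le> B" and uv: "\<And>z. 0 \<le> u z \<and> u z \<le> v z"
  shows "\<alpha> (\<lambda>z. complex_of_real (u z)) \<le> \<alpha> (\<lambda>z. complex_of_real (v z))"
proof -
  define h where "h z = (if v z = 0 then 0 else u z / v z)" for z
  have hm[measurable]: "h \<in> borel_measurable borel" unfolding h_def by measurable
  have h01: "0 \<le> h z \<and> h z \<le> 1" for z
    using uv[of z] by (auto simp: h_def field_simps)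
  define e where "e z = complex_of_real (h z) + \<i> * complex_of_real (sqrt (1 - (h z)^2))" for z
  have em[measurable]: "e \<in> borel_measurable borel" unfolding e_def by measurable
  have e1: "cmod (e z) = 1" for z
  proof -
    have "(h z)^2 \<le> 1" using h01[of z] by (simp add: power_le_one)
    then have "cmod (e z) = sqrt ((h z)^2 + (sqrt (1 - (h z)^2))^2)"
      unfolding e_def by (simp add: cmod_def)
    also have "\<dots> = 1" using \<open>(h z)^2 \<le> 1\<close> by simp
    finally show ?thesis .
  qed
  define f1 where "f1 z = complex_of_real (v z) * e z" for z
  define f2 where "f2 z = complex_of_real (v z) * cnj (e z)" for z
  have v0: "0 \<le> v z" for z using uv[of z] by linarith
  have f1m[measurable]: "f1 \<in> borel_measurable borel" unfolding f1_def by measurable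
  have f2m[measurable]: "f2 \<in> borel_measurable borel" unfolding f2_def by measurable
  have n1: "cmod (f1 z) = v z" for z unfolding f1_def using e1 v0 by (simp add: norm_mult)
  have n2: "cmod (f2 z) = v z" for z unfolding f2_def using e1 v0 by (simp add: norm_mult)
  have f1L: "f1 \<in> Linf" by (rule Linf_I[of _ B]) (use n1 vb in auto)
  have f2L: "f2 \<in> Linf" by (rule Linf_I[of _ B]) (use n2 vb in auto)
  have f12L: "(\<lambda>z. f1 z + f2 z) \<in> Linf"
    by (rule Linf_I[of _ "2*B"]) (use n1 n2 vb in \<open>auto intro!: order_trans[OF norm_triangle_ineq]\<close>)
  have a1: "\<alpha> f1 = \<alpha> (\<lambda>z. complex_of_real (v z))" using absinv[OF f1L] by (simp add: n1)
  have a2: "\<alpha> f2 = \<alpha> (\<lambda>z. complex_of_real (v z))" using absinv[OF f2L] by (simp add: n2)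
  have ueq: "(\<lambda>z. complex_of_real (u z)) = (\<lambda>z. (1/2) * (f1 z + f2 z))"
  proof
    fix z
    have "e z + cnj (e z) = 2 * complex_of_real (h z)" unfolding e_def by (simp add: complex_eq_iff)
    then have "(1/2) * (f1 z + f2 z) = complex_of_real (v z * h z)"
      unfolding f1_def f2_def by (simp add: distrib_left[symmetric])
    also have "v z * h z = u z" using uv[of z] by (auto simp: h_def)
    finally show "complex_of_real (u z) = (1/2) * (f1 z + f2 z)" by simp
  qed
  have "\<alpha> (\<lambda>z. complex_of_real (u z)) = (1/2) * \<alpha> (\<lambda>z. f1 z + f2 z)"
    unfolding ueq by (subst homog[OF f12L]) simp
  also have "\<dots> \<le> (1/2) * (\<alpha> f1 + \<alpha> f2)" using triangle[OF f1L f2L] by simp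
  also have "\<dots> = \<alpha> (\<lambda>z. complex_of_real (v z))" using a1 a2 by simp
  finally show ?thesis .
qed

lemma bound:
  fixes u :: "complex \<Rightarrow> real"
  assumes [measurable]: "u \<in> borel_measurable borel" and "\<And>z. 0 \<le> u z \<and> u z \<le> c"
  shows "\<alpha> (\<lambda>z. complex_of_real (u z)) \<le> c"
proof -
  have "\<alpha> (\<lambda>z. complex_of_real (u z)) \<le> \<alpha> (\<lambda>z. complex_of_real c)"
    by (rule mono[of _ _ c]) (use assms in auto)
  also have "\<dots> = c" using assms(2)[of 0] by (simp add: const)
  finally show ?thesis .
qed


lemma BT_Linf:
  assumes "t \<in> BT F" shows "(\<lambda>z. complex_of_real (t z)) \<in> Linf"
proof -
  from assms obtain B where "\<forall>z. t z \<le> B" "t \<in> borel_measurable borel" "\<forall>z. 0 \<le> t z" unfolding BT_def by auto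
  then show ?thesis by (intro Linf_realI[of _ B]) auto
qed

lemma alpha_ext_char:
  "alpha_ext \<alpha> F = (SUP t\<in>BT F. ereal (\<alpha> (\<lambda>z. complex_of_real (t z))))"
proof (rule antisym)
  show "alpha_ext \<alpha> F \<le> (SUP t\<in>BT F. ereal (\<alpha> (\<lambda>z. complex_of_real (t z))))"
    unfolding alpha_ext_def
  proof (rule SUP_subset_mono)
    show "{s. simple_function circ s \<and> (\<forall>z. 0 \<le> s z \<and> s z \<le> cmod (F z))} \<subseteq> BT F"
    proof
      fix s assume s: "s \<in> {s. simple_function circ s \<and> (\<forall>z. 0 \<le> s z \<and> s z \<le> cmod (F z))}"
      then have sf: "simple_function circ s" by auto
      have "finite (s ` UNIV)" using simple_functionD(1)[OF sf] by simp
      then have "\<exists>B. \<forall>z. s z \<le> B" by (intro exI[of _ "Max (s ` UNIV)"]) auto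
      moreover have "s \<in> borel_measurable borel" using borel_measurable_simple_function[OF sf] by simp
      ultimately show "s \<in> BT F" using s unfolding BT_def by auto
    qed
  qed simp
next
  show "(SUP t\<in>BT F. ereal (\<alpha> (\<lambda>z. complex_of_real (t z)))) \<le> alpha_ext \<alpha> F"
  proof (rule SUP_least)
    fix t assume t: "t \<in> BT F"
    then obtain B where tB: "\<And>z. t z \<le> B" and tm[measurable]: "t \<in> borel_measurable borel"
      and t0: "\<And>z. 0 \<le> t z \<and> t z \<le> cmod (F z)" unfolding BT_def by auto
    show "ereal (\<alpha> (\<lambda>z. complex_of_real (t z))) \<le> alpha_ext \<alpha> F"
    proof (rule ereal_le_epsilon2)
      fix e :: real assume e: "0 < e"
      obtain k :: nat where k0: "inverse (real (Suc k)) < e" using reals_Archimedean[OF e] by blast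
      then have k: "1 / real (Suc k) < e" by (simp add: inverse_eq_divide)
      define m where "m = real (Suc k)"
      have m0: "0 < m" unfolding m_def by simp
      define s where "s z = real_of_int \<lfloor>m * t z\<rfloor> / m" for z
      have sm[measurable]: "s \<in> borel_measurable borel" unfolding s_def by measurable
      have s0: "0 \<le> s z" for z using t0[of z] m0 unfolding s_def by simp
      have st: "s z \<le> t z" for z
      proof -
        have "real_of_int \<lfloor>m * t z\<rfloor> \<le> m * t z" by linarith
        then show ?thesis unfolding s_def using m0 by (simp add: divide_le_eq mult.commute)
      qed
      have ts: "t z - s z \<le> 1 / m" for z
      proof -
        have "m * t z < real_of_int \<lfloor>m * t z\<rfloor> + 1" by linarith
        have "t z - s z = (m * t z - real_of_int \<lfloor>m * t z\<rfloor>) / m" unfolding s_def using m0 by (simp add: field_simps)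
        also have "\<dots> \<le> 1 / m" using \<open>m * t z < real_of_int \<lfloor>m * t z\<rfloor> + 1\<close> m0 by (intro divide_right_mono) linarith+
        finally show ?thesis .
      qed
      have fin: "finite (s ` UNIV)"
      proof (rule finite_subset)
        show "s ` UNIV \<subseteq> (\<lambda>i. real_of_int i / m) ` {0..\<lceil>m * B\<rceil>}"
        proof
          fix y assume "y \<in> s ` UNIV"
          then obtain z where y: "y = s z" by auto
          have "0 \<le> \<lfloor>m * t z\<rfloor>" using t0[of z] m0 by simp
          moreover have "\<lfloor>m * t z\<rfloor> \<le> \<lceil>m * B\<rceil>"
          proof -
            have "m * t z \<le> m * B" using tB[of z] m0 by simp
            then show ?thesis by linarith
          qed
          ultimately show "y \<in> (\<lambda>i. real_of_int i / m) ` {0..\<lceil>m * B\<rceil>}" unfolding y s_def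
            by (intro image_eqI[of _ _ "\<lfloor>m * t z\<rfloor>"]) auto
        qed
      qed simp
      have sf: "simple_function circ s"
        by (rule simple_function_borel_measurable) (use fin in simp_all)
      have "s z \<le> cmod (F z)" for z using st[of z] t0[of z] by linarith
      then have sin: "s \<in> {s. simple_function circ s \<and> (\<forall>z. 0 \<le> s z \<and> s z \<le> cmod (F z))}"
        using sf s0 by blast
      have sL: "(\<lambda>z. complex_of_real (s z)) \<in> Linf"
      proof (rule Linf_realI[of _ B])
        show "\<bar>s z\<bar> \<le> B" for z using s0[of z] st[of z] tB[of z] by simp
      qed simp
      have dL: "(\<lambda>z. complex_of_real (t z - s z)) \<in> Linf"
      proof (rule Linf_realI[of _ "1/m"])
        show "\<bar>t z - s z\<bar> \<le> 1/m" for z using st[of z] ts[of z] by simp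
      qed simp
      have eqst: "(\<lambda>z. complex_of_real (t z)) = (\<lambda>z. complex_of_real (s z) + complex_of_real (t z - s z))"
        by simp
      have tri: "\<alpha> (\<lambda>z. complex_of_real (t z)) \<le> \<alpha> (\<lambda>z. complex_of_real (s z)) + \<alpha> (\<lambda>z. complex_of_real (t z - s z))"
        unfolding eqst by (rule triangle[OF sL dL])
      have bd: "\<alpha> (\<lambda>z. complex_of_real (t z - s z)) \<le> 1 / m"
      proof (rule bound)
        show "0 \<le> t z - s z \<and> t z - s z \<le> 1 / m" for z using st[of z] ts[of z] by linarith
      qed simp
      have "1 / m < e" using k unfolding m_def by simp
      then have "\<alpha> (\<lambda>z. complex_of_real (t z)) \<le> \<alpha> (\<lambda>z. complex_of_real (s z)) + e"
        using tri bd by linarith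
      then have "ereal (\<alpha> (\<lambda>z. complex_of_real (t z))) \<le> ereal (\<alpha> (\<lambda>z. complex_of_real (s z))) + ereal e"
        by simp
      also have "ereal (\<alpha> (\<lambda>z. complex_of_real (s z))) \<le> alpha_ext \<alpha> F"
        unfolding alpha_ext_def by (rule SUP_upper[OF sin])
      finally show "ereal (\<alpha> (\<lambda>z. complex_of_real (t z))) \<le> alpha_ext \<alpha> F + ereal e"
        by (simp add: add_right_mono)
    qed
  qed
qed

end

context rsn begin

lemma zero_BT: "(\<lambda>z. 0) \<in> BT F"
  unfolding BT_def by auto

lemma ext_nonneg: "0 \<le> alpha_ext \<alpha> F"
proof -
  have "ereal (\<alpha> (\<lambda>z. complex_of_real ((\<lambda>z. 0) z))) \<le> alpha_ext \<alpha> F"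
    unfolding alpha_ext_char by (rule SUP_upper[OF zero_BT])
  then show ?thesis by (simp add: const zero_ereal_def)
qed

lemma ext_mono_pw:
  assumes "\<And>z. cmod (F z) \<le> cmod (G z)"
  shows "alpha_ext \<alpha> F \<le> alpha_ext \<alpha> G"
  unfolding alpha_ext_char
proof (rule SUP_subset_mono)
  show "BT F \<subseteq> BT G" unfolding BT_def using assms order_trans by blast
qed simp

lemma ext_mono_AE:
  assumes Fm[measurable]: "F \<in> borel_measurable borel" and Gm[measurable]: "G \<in> borel_measurable borel"
    and ae: "AE z in circ. cmod (F z) \<le> cmod (G z)"
  shows "alpha_ext \<alpha> F \<le> alpha_ext \<alpha> G"
  unfolding alpha_ext_char
proof (rule SUP_least)
  fix t assume t: "t \<in> BT F"
  then obtain B where tB: "\<And>z. t z \<le> B" and tm[measurable]: "t \<in> borel_measurable borel"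
    and t0: "\<And>z. 0 \<le> t z \<and> t z \<le> cmod (F z)" unfolding BT_def by auto
  have B0: "0 \<le> B" using t0[of 0] tB[of 0] by linarith
  define S where "S = {z. cmod (F z) \<le> cmod (G z)}"
  have Sm[measurable]: "S \<in> sets borel" unfolding S_def by measurable
  define t' where "t' z = t z * indicator S z" for z
  have t'm[measurable]: "t' \<in> borel_measurable borel" unfolding t'_def by measurable
  have t'BT: "t' \<in> BT G" unfolding BT_def
  proof (intro CollectI conjI allI)
    show "\<exists>B. \<forall>z. t' z \<le> B" using tB t0 B0 by (intro exI[of _ B]) (auto simp: t'_def indicator_def)
    fix z show "0 \<le> t' z" using t0[of z] by (auto simp: t'_def indicator_def)
    show "t' z \<le> cmod (G z)" using t0[of z] by (auto simp: t'_def indicator_def S_def)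
  qed simp
  have "\<alpha> (\<lambda>z. complex_of_real (t z)) = \<alpha> (\<lambda>z. complex_of_real (t' z))"
  proof (rule ae_eq[OF BT_Linf[OF t] BT_Linf[OF t'BT]])
    show "AE z in circ. complex_of_real (t z) = complex_of_real (t' z)"
      using ae by eventually_elim (auto simp: t'_def S_def)
  qed
  also have "ereal (\<alpha> (\<lambda>z. complex_of_real (t' z))) \<le> (SUP t\<in>BT G. ereal (\<alpha> (\<lambda>z. complex_of_real (t z))))"
    by (rule SUP_upper[OF t'BT])
  finally show "ereal (\<alpha> (\<lambda>z. complex_of_real (t z))) \<le> (SUP t\<in>BT G. ereal (\<alpha> (\<lambda>z. complex_of_real (t z))))" .
qed

lemma ext_cong_AE:
  assumes "F \<in> borel_measurable borel" "G \<in> borel_measurable borel"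
    and ae: "AE z in circ. cmod (F z) = cmod (G z)"
  shows "alpha_ext \<alpha> F = alpha_ext \<alpha> G"
proof (rule antisym)
  show "alpha_ext \<alpha> F \<le> alpha_ext \<alpha> G" by (rule ext_mono_AE) (use assms in auto)
  show "alpha_ext \<alpha> G \<le> alpha_ext \<alpha> F" by (rule ext_mono_AE) (use assms in auto)
qed

lemma ext_zero_fun: "alpha_ext \<alpha> (\<lambda>z. 0) = 0"
proof (rule antisym)
  show "alpha_ext \<alpha> (\<lambda>z. 0) \<le> 0"
    unfolding alpha_ext_char
  proof (rule SUP_least)
    fix t assume "t \<in> BT (\<lambda>z. 0)"
    then have "\<forall>z. 0 \<le> t z \<and> t z \<le> 0" unfolding BT_def by auto
    then have "t = (\<lambda>z. 0)" by (intro ext antisym) auto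
    then show "ereal (\<alpha> (\<lambda>z. complex_of_real (t z))) \<le> 0" by (simp add: const)
  qed
qed (rule ext_nonneg)

lemma ext_AE0:
  assumes "F \<in> borel_measurable borel" "AE z in circ. F z = 0"
  shows "alpha_ext \<alpha> F = 0"
proof -
  have "alpha_ext \<alpha> F = alpha_ext \<alpha> (\<lambda>z. 0)"
    by (rule ext_cong_AE) (use assms in auto)
  then show ?thesis by (simp add: ext_zero_fun)
qed

lemma ext_add:
  assumes Fm[measurable]: "F \<in> borel_measurable borel" and Gm[measurable]: "G \<in> borel_measurable borel"
  shows "alpha_ext \<alpha> (\<lambda>z. F z + G z) \<le> alpha_ext \<alpha> F + alpha_ext \<alpha> G"
  unfolding alpha_ext_char[of "\<lambda>z. F z + G z"]
proof (rule SUP_least)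
  fix t assume t: "t \<in> BT (\<lambda>z. F z + G z)"
  then obtain B where tB: "\<And>z. t z \<le> B" and tm[measurable]: "t \<in> borel_measurable borel"
    and t0: "\<And>z. 0 \<le> t z \<and> t z \<le> cmod (F z + G z)" unfolding BT_def by auto
  define d where "d z = cmod (F z) + cmod (G z)" for z
  have dm[measurable]: "d \<in> borel_measurable borel" unfolding d_def by measurable
  have td: "t z \<le> d z" for z using t0[of z] norm_triangle_ineq[of "F z" "G z"] unfolding d_def by linarith
  define t1 where "t1 z = t z * cmod (F z) / d z" for z
  define t2 where "t2 z = t z * cmod (G z) / d z" for z
  have t1m[measurable]: "t1 \<in> borel_measurable borel" unfolding t1_def by measurable
  have t2m[measurable]: "t2 \<in> borel_measurable borel" unfolding t2_def by measurable
  have d0: "0 \<le> d z" for z unfolding d_def by simp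
  have t1b: "0 \<le> t1 z \<and> t1 z \<le> cmod (F z) \<and> t1 z \<le> t z" for z
  proof (cases "d z = 0")
    case True then show ?thesis using t0[of z] by (simp add: t1_def)
  next
    case False
    then have dp: "0 < d z" using d0[of z] by linarith
    have "t z * cmod (F z) \<le> d z * cmod (F z)" using td[of z] by (simp add: mult_right_mono)
    moreover have "t z * cmod (F z) \<le> t z * d z" using t0[of z] by (intro mult_left_mono) (auto simp: d_def)
    ultimately show ?thesis using dp t0[of z] unfolding t1_def by (simp add: divide_le_eq mult.commute)
  qed
  have t2b: "0 \<le> t2 z \<and> t2 z \<le> cmod (G z) \<and> t2 z \<le> t z" for z
  proof (cases "d z = 0")
    case True then show ?thesis using t0[of z] by (simp add: t2_def)
  next
    case False
    then have dp: "0 < d z" using d0[of z] by linarith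
    have "t z * cmod (G z) \<le> d z * cmod (G z)" using td[of z] by (simp add: mult_right_mono)
    moreover have "t z * cmod (G z) \<le> t z * d z" using t0[of z] by (intro mult_left_mono) (auto simp: d_def)
    ultimately show ?thesis using dp t0[of z] unfolding t2_def by (simp add: divide_le_eq mult.commute)
  qed
  have sum: "t z = t1 z + t2 z" for z
  proof (cases "d z = 0")
    case True
    then have "t z = 0" using td[of z] t0[of z] by linarith
    then show ?thesis by (simp add: t1_def t2_def)
  next
    case False
    have "t1 z + t2 z = t z * d z / d z" unfolding t1_def t2_def
      by (simp add: add_divide_distrib[symmetric] distrib_left[symmetric] d_def)
    then show ?thesis using False by simp
  qed
  have "t1 z \<le> B" "t2 z \<le> B" for z using t1b[of z] t2b[of z] tB[of z] by linarith+
  then have t1BT: "t1 \<in> BT F" and t2BT: "t2 \<in> BT G" unfolding BT_def using t1b t2b by auto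
  have eq: "(\<lambda>z. complex_of_real (t z)) = (\<lambda>z. complex_of_real (t1 z) + complex_of_real (t2 z))"
    using sum by (simp add: fun_eq_iff)
  have "\<alpha> (\<lambda>z. complex_of_real (t z)) \<le> \<alpha> (\<lambda>z. complex_of_real (t1 z)) + \<alpha> (\<lambda>z. complex_of_real (t2 z))"
    unfolding eq by (rule triangle[OF BT_Linf[OF t1BT] BT_Linf[OF t2BT]])
  then have "ereal (\<alpha> (\<lambda>z. complex_of_real (t z))) \<le> ereal (\<alpha> (\<lambda>z. complex_of_real (t1 z))) + ereal (\<alpha> (\<lambda>z. complex_of_real (t2 z)))"
    by simp
  also have "\<dots> \<le> alpha_ext \<alpha> F + alpha_ext \<alpha> G"
    unfolding alpha_ext_char by (intro add_mono SUP_upper t1BT t2BT)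
  finally show "ereal (\<alpha> (\<lambda>z. complex_of_real (t z))) \<le> alpha_ext \<alpha> F + alpha_ext \<alpha> G" .
qed

lemma ext_rot:
  assumes c: "cmod c = 1"
  shows "alpha_ext \<alpha> (\<lambda>z. F (c * z)) \<le> alpha_ext \<alpha> F"
  unfolding alpha_ext_char[of "\<lambda>z. F (c * z)"]
proof (rule SUP_least)
  fix t assume t: "t \<in> BT (\<lambda>z. F (c * z))"
  then obtain B where tB: "\<And>z. t z \<le> B" and tm[measurable]: "t \<in> borel_measurable borel"
    and t0: "\<And>z. 0 \<le> t z \<and> t z \<le> cmod (F (c * z))" unfolding BT_def by auto
  have "c * cnj c = complex_of_real ((cmod c)^2)" by (rule complex_norm_square[symmetric])
  then have cc: "c * cnj c = 1" using c by simp
  define t' where "t' z = t (cnj c * z)" for z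
  have t'm[measurable]: "t' \<in> borel_measurable borel" unfolding t'_def by measurable
  have t'BT: "t' \<in> BT F" unfolding BT_def
  proof (intro CollectI conjI allI)
    show "\<exists>B. \<forall>z. t' z \<le> B" using tB by (intro exI[of _ B]) (auto simp: t'_def)
    fix z show "0 \<le> t' z" using t0 by (simp add: t'_def)
    have "t' z \<le> cmod (F (c * (cnj c * z)))" using t0[of "cnj c * z"] by (simp add: t'_def)
    also have "c * (cnj c * z) = z" using cc by (simp add: mult.assoc[symmetric])
    finally show "t' z \<le> cmod (F z)" .
  qed simp
  have "(\<lambda>z. complex_of_real (t' z)) = rot c (\<lambda>z. complex_of_real (t z))"
    unfolding rot_def t'_def by simp
  then have "\<alpha> (\<lambda>z. complex_of_real (t' z)) = \<alpha> (\<lambda>z. complex_of_real (t z))"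
    using rotinv[OF BT_Linf[OF t] c] by simp
  moreover have "ereal (\<alpha> (\<lambda>z. complex_of_real (t' z))) \<le> (SUP t\<in>BT F. ereal (\<alpha> (\<lambda>z. complex_of_real (t z))))"
    by (rule SUP_upper[OF t'BT])
  ultimately show "ereal (\<alpha> (\<lambda>z. complex_of_real (t z))) \<le> alpha_ext \<alpha> F"
    unfolding alpha_ext_char by simp
qed

lemma ext_zero:
  assumes Fm[measurable]: "F \<in> borel_measurable borel" and z: "alpha_ext \<alpha> F \<le> 0"
  shows "AE z in circ. F z = 0"
proof -
  have k: "AE z in circ. \<not> (1 / real (Suc k) < cmod (F z))" for k
  proof -
    define S where "S = {z. 1 / real (Suc k) < cmod (F z)}"
    have Sm[measurable]: "S \<in> sets borel" unfolding S_def by measurable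
    define t where "t z = indicator S z / real (Suc k)" for z
    have tm[measurable]: "t \<in> borel_measurable borel" unfolding t_def by measurable
    have tBT: "t \<in> BT F" unfolding BT_def
    proof (intro CollectI conjI allI)
      show "\<exists>B. \<forall>z. t z \<le> B" by (intro exI[of _ 1]) (auto simp: t_def indicator_def)
      fix z show "0 \<le> t z" by (simp add: t_def)
      show "t z \<le> cmod (F z)" by (auto simp: t_def indicator_def S_def less_imp_le)
    qed simp
    have "ereal (\<alpha> (\<lambda>z. complex_of_real (t z))) \<le> alpha_ext \<alpha> F"
      unfolding alpha_ext_char by (rule SUP_upper[OF tBT])
    then have "ereal (\<alpha> (\<lambda>z. complex_of_real (t z))) \<le> 0" using z by (rule order_trans)
    then have "\<alpha> (\<lambda>z. complex_of_real (t z)) \<le> 0" by (simp add: zero_ereal_def)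
    then have "\<alpha> (\<lambda>z. complex_of_real (t z)) = 0" using nonneg[OF BT_Linf[OF tBT]] by simp
    from zero_ae[OF BT_Linf[OF tBT] this] show ?thesis
    proof eventually_elim
      case (elim z)
      then have "t z = 0" by simp
      then have "z \<notin> S" by (auto simp: t_def indicator_def split: if_splits)
      then show ?case by (simp add: S_def)
    qed
  qed
  have "AE z in circ. \<forall>k. \<not> (1 / real (Suc k) < cmod (F z))"
    using k by (simp add: AE_all_countable)
  then show ?thesis
  proof eventually_elim
    case (elim z)
    show "F z = 0"
    proof (rule ccontr)
      assume "F z \<noteq> 0"
      then have "0 < cmod (F z)" by simp
      from reals_Archimedean[OF this] obtain k where "inverse (real (Suc k)) < cmod (F z)" by blast
      then show False using elim[rule_format, of k] by (simp add: inverse_eq_divide)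
    qed
  qed
qed

end

lemma exp_meas[measurable]: "(exp :: complex \<Rightarrow> complex) \<in> borel_measurable borel"
  by (intro borel_measurable_continuous_onI continuous_intros)

lemma circ_AE_inv:
  assumes c: "cmod c = 1" and n: "n \<ge> 1" and P: "{w. P w} \<in> sets borel"
  shows "(AE w in circ. P w) \<longleftrightarrow> (AE z in circ. P (c * z ^ n))"
proof -
  have "(AE w in circ. P w) \<longleftrightarrow> (AE w in distr circ borel (\<lambda>z. c * z ^ n). P w)"
    by (simp only: circ_inv[OF c n])
  also have "\<dots> \<longleftrightarrow> (AE z in circ. P (c * z ^ n))"
    by (rule AE_distr_iff) (use P in auto)
  finally show ?thesis .
qed

lemma circ_int_inv:
  fixes g :: "complex \<Rightarrow> complex"
  assumes c: "cmod c = 1" and n: "n \<ge> 1" and g[measurable]: "g \<in> borel_measurable borel"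
  shows "integral\<^sup>L circ g = integral\<^sup>L circ (\<lambda>z. g (c * z ^ n))"
proof -
  have "integral\<^sup>L circ g = integral\<^sup>L (distr circ borel (\<lambda>z. c * z ^ n)) g"
    using circ_inv[OF c n] by simp
  also have "\<dots> = integral\<^sup>L circ (\<lambda>z. g (c * z ^ n))"
    by (rule integral_distr) auto
  finally show ?thesis .
qed

lemma circ_int_rot:
  fixes g :: "complex \<Rightarrow> complex"
  assumes c: "cmod c = 1" and g[measurable]: "g \<in> borel_measurable borel"
  shows "integral\<^sup>L circ g = integral\<^sup>L circ (\<lambda>z. g (c * z))"
  using circ_int_inv[OF c _ g, of 1] by simp

lemma circ_int_pow:
  fixes g :: "complex \<Rightarrow> complex"
  assumes n: "n \<ge> 1" and g[measurable]: "g \<in> borel_measurable borel"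
  shows "integral\<^sup>L circ g = integral\<^sup>L circ (\<lambda>z. g (z ^ n))"
  using circ_int_inv[of 1, OF _ n g] by simp

lemma circ_AE_rot:
  assumes c: "cmod c = 1" and P: "{w. P w} \<in> sets borel"
  shows "(AE w in circ. P w) \<longleftrightarrow> (AE z in circ. P (c * z))"
  using circ_AE_inv[OF c _ P, of 1] by simp

lemma circ_AE_pow:
  assumes n: "n \<ge> 1" and P: "{w. P w} \<in> sets borel"
  shows "(AE w in circ. P w) \<longleftrightarrow> (AE z in circ. P (z ^ n))"
  using circ_AE_inv[of 1, OF _ n P] by simp

lemma integrable_bdd:
  fixes f :: "complex \<Rightarrow> complex"
  assumes "f \<in> borel_measurable borel" "AE z in circ. cmod (f z) \<le> C"
  shows "integrable circ f"
  using finite_measure.integrable_const_bound[OF finite_circ, of f C] assms by simp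

lemma Linf_E:
  assumes "f \<in> Linf"
  obtains C where "f \<in> borel_measurable borel" "AE z in circ. cmod (f z) \<le> C"
  using assms unfolding Linf_def by auto

lemma Linf_integrable:
  assumes "f \<in> Linf" "g \<in> borel_measurable borel" "AE z in circ. cmod (g z) \<le> D"
  shows "integrable circ (\<lambda>z. f z * g z)"
proof -
  obtain C where [measurable]: "f \<in> borel_measurable borel" and C: "AE z in circ. cmod (f z) \<le> C"
    using Linf_E[OF assms(1)] by blast
  note [measurable] = assms(2)
  show ?thesis
  proof (rule integrable_bdd[of _ "C * D"])
    show "AE z in circ. cmod (f z * g z) \<le> C * D"
      using C assms(3) by eventually_elim (auto simp: norm_mult intro: mult_mono order_trans[OF norm_ge_zero])
  qed measurable
qed

lemma Linf_add: "f \<in> Linf \<Longrightarrow> g \<in> Linf \<Longrightarrow> (\<lambda>z. f z + g z) \<in> Linf"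
proof -
  assume "f \<in> Linf" "g \<in> Linf"
  then obtain C D where [measurable]: "f \<in> borel_measurable borel" "g \<in> borel_measurable borel"
    and C: "AE z in circ. cmod (f z) \<le> C" and D: "AE z in circ. cmod (g z) \<le> D"
    by (metis Linf_E)
  have "AE z in circ. cmod (f z + g z) \<le> C + D"
    using C D by eventually_elim (auto intro: order_trans[OF norm_triangle_ineq])
  then show ?thesis unfolding Linf_def by auto
qed

lemma Linf_mult_bdd:
  assumes "f \<in> Linf" "g \<in> borel_measurable borel" "\<And>z. cmod z = 1 \<Longrightarrow> cmod (g z) \<le> D"
  shows "(\<lambda>z. g z * f z) \<in> Linf"
proof -
  obtain C where [measurable]: "f \<in> borel_measurable borel" and C: "AE z in circ. cmod (f z) \<le> C"
    using Linf_E[OF assms(1)] by blast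
  note [measurable] = assms(2)
  have "AE z in circ. cmod (g z * f z) \<le> D * C"
    using C AE_circ_T by eventually_elim (use assms(3) in \<open>auto simp: norm_mult intro: mult_mono order_trans[OF norm_ge_zero]\<close>)
  then show ?thesis unfolding Linf_def by auto
qed

lemma Linf_comp:
  assumes "f \<in> Linf" "cmod c = 1" "n \<ge> 1"
  shows "(\<lambda>z. f (c * z ^ n)) \<in> Linf"
proof -
  obtain C where [measurable]: "f \<in> borel_measurable borel" and C: "AE z in circ. cmod (f z) \<le> C"
    using Linf_E[OF assms(1)] by blast
  have "AE z in circ. cmod (f (c * z ^ n)) \<le> C"
    using C circ_AE_inv[OF assms(2,3), of "\<lambda>w. cmod (f w) \<le> C"] by simp
  then show ?thesis unfolding Linf_def by auto
qed


definition RU :: "nat \<Rightarrow> complex set" where "RU n = {\<omega>. \<omega> ^ n = 1}"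

lemma RU_finite: "n \<ge> 1 \<Longrightarrow> finite (RU n)"
  unfolding RU_def using card_complex_roots_unity[of n] by (metis card.infinite not_one_le_zero)

lemma RU_card: "n \<ge> 1 \<Longrightarrow> card (RU n) = n"
  unfolding RU_def by (rule card_complex_roots_unity)

lemma RU_norm: "n \<ge> 1 \<Longrightarrow> \<omega> \<in> RU n \<Longrightarrow> cmod \<omega> = 1"
  unfolding RU_def using power_eq_1_iff[of \<omega> n] by auto

lemma cnj_mult_1: "cmod c = 1 \<Longrightarrow> c * cnj c = 1"
proof -
  assume c: "cmod c = 1"
  have "c * cnj c = complex_of_real ((cmod c)^2)" by (rule complex_norm_square[symmetric])
  then show ?thesis using c by simp
qed

lemma cnj_mult_1': "cmod c = 1 \<Longrightarrow> cnj c * c = 1"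
  using cnj_mult_1 by (simp add: mult.commute)

lemma RU_shift:
  assumes n: "n \<ge> 1" and z: "\<zeta> \<in> RU n"
  shows "(\<Sum>\<omega>\<in>RU n. f (\<omega> * \<zeta>)) = (\<Sum>\<omega>\<in>RU n. f \<omega>)"
proof (rule sum.reindex_bij_betw)
  have zn: "cmod \<zeta> = 1" using RU_norm[OF n z] .
  have zz: "\<zeta> * cnj \<zeta> = 1" by (rule cnj_mult_1[OF zn])
  have "\<zeta> \<noteq> 0" using zn by auto
  show "bij_betw (\<lambda>\<omega>. \<omega> * \<zeta>) (RU n) (RU n)"
  proof (rule bij_betwI[where g = "\<lambda>\<omega>. \<omega> * cnj \<zeta>"])
    show "(\<lambda>\<omega>. \<omega> * \<zeta>) \<in> RU n \<rightarrow> RU n" using z by (auto simp: RU_def power_mult_distrib)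
    have "cnj \<zeta> ^ n = 1" using z by (metis RU_def complex_cnj_one complex_cnj_power mem_Collect_eq)
    then show "(\<lambda>\<omega>. \<omega> * cnj \<zeta>) \<in> RU n \<rightarrow> RU n" by (auto simp: RU_def power_mult_distrib)
    show "x * \<zeta> * cnj \<zeta> = x" for x using zz by (simp add: mult.assoc)
    show "y * cnj \<zeta> * \<zeta> = y" for y using zz by (simp add: mult.assoc mult.commute)
  qed
qed

lemma RU_witness:
  assumes n: "n \<ge> 1" and m: "\<not> n dvd m"
  shows "\<exists>\<zeta>\<in>RU n. \<zeta> ^ m \<noteq> 1"
proof -
  define \<zeta> where "\<zeta> = exp (2 * of_real pi * \<i> * of_nat 1 / of_nat n)"
  have pw: "\<zeta> ^ k = exp (2 * of_real pi * \<i> * of_nat k / of_nat n)" for k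
    unfolding \<zeta>_def by (simp add: exp_of_nat_mult[symmetric] field_simps)
  have "\<zeta> ^ n = 1" unfolding pw using complex_root_unity_eq_1[OF n, of n] by simp
  moreover have "\<zeta> ^ m \<noteq> 1" unfolding pw using complex_root_unity_eq_1[OF n, of m] m by simp
  ultimately show ?thesis unfolding RU_def by blast
qed

lemma RU_sum_pow:
  assumes n: "n \<ge> 1"
  shows "(\<Sum>\<omega>\<in>RU n. \<omega> ^ m) = (if n dvd m then of_nat n else 0)"
proof (cases "n dvd m")
  case True
  then obtain l where l: "m = n * l" by blast
  have "(\<Sum>\<omega>\<in>RU n. \<omega> ^ m) = (\<Sum>\<omega>\<in>RU n. 1)"
    by (rule sum.cong) (auto simp: RU_def l power_mult)
  also have "\<dots> = of_nat n" using RU_card[OF n] by simp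
  finally show ?thesis using True by simp
next
  case False
  obtain \<zeta> where z: "\<zeta> \<in> RU n" "\<zeta> ^ m \<noteq> 1" using RU_witness[OF n False] by blast
  define S where "S = (\<Sum>\<omega>\<in>RU n. \<omega> ^ m)"
  have "S = (\<Sum>\<omega>\<in>RU n. (\<omega> * \<zeta>) ^ m)" unfolding S_def using RU_shift[OF n z(1), of "\<lambda>\<omega>. \<omega> ^ m"] by simp
  also have "\<dots> = \<zeta> ^ m * S" unfolding S_def by (simp add: power_mult_distrib sum_distrib_left mult.commute)
  finally have "(1 - \<zeta> ^ m) * S = 0" by (simp add: algebra_simps)
  then have "S = 0" using z(2) by simp
  then show ?thesis using False unfolding S_def by simp
qed

lemma Hinf_Linf: "f \<in> Hinf \<Longrightarrow> f \<in> Linf"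
  unfolding Hinf_def by auto

lemma Hinf_coef: "f \<in> Hinf \<Longrightarrow> k \<ge> 1 \<Longrightarrow> integral\<^sup>L circ (\<lambda>z. f z * z ^ k) = 0"
  unfolding Hinf_def by auto

lemma Linf_meas: "f \<in> Linf \<Longrightarrow> f \<in> borel_measurable borel"
  unfolding Linf_def by auto

lemma AE_pow_bound: "AE z in circ. cmod (z ^ k) \<le> 1"
  using AE_circ_T by eventually_elim (simp add: norm_power)

lemma Linf_int_pow: "f \<in> Linf \<Longrightarrow> integrable circ (\<lambda>z. f z * z ^ k)"
  by (rule Linf_integrable[OF _ _ AE_pow_bound]) auto

lemma Hinf_zero: "(\<lambda>z. 0) \<in> Hinf"
  unfolding Hinf_def Linf_def by auto

lemma Hinf_add:
  assumes f: "f \<in> Hinf" and g: "g \<in> Hinf"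
  shows "(\<lambda>z. f z + g z) \<in> Hinf"
  unfolding Hinf_def
proof (intro CollectI conjI allI impI)
  show "(\<lambda>z. f z + g z) \<in> Linf" using Linf_add Hinf_Linf f g by blast
  fix k :: nat assume k: "1 \<le> k"
  have "integral\<^sup>L circ (\<lambda>z. (f z + g z) * z ^ k) = integral\<^sup>L circ (\<lambda>z. f z * z ^ k + g z * z ^ k)"
    by (simp add: distrib_right)
  also have "\<dots> = integral\<^sup>L circ (\<lambda>z. f z * z ^ k) + integral\<^sup>L circ (\<lambda>z. g z * z ^ k)"
    by (rule Bochner_Integration.integral_add) (use Linf_int_pow Hinf_Linf f g in auto)
  also have "\<dots> = 0" using Hinf_coef[OF f k] Hinf_coef[OF g k] by simp
  finally show "integral\<^sup>L circ (\<lambda>z. (f z + g z) * z ^ k) = 0" .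
qed

lemma Hinf_sum:
  assumes "finite A" "\<And>j. j \<in> A \<Longrightarrow> f j \<in> Hinf"
  shows "(\<lambda>z. \<Sum>j\<in>A. f j z) \<in> Hinf"
  using assms
proof (induction A rule: finite_induct)
  case empty
  then show ?case using Hinf_zero by simp
next
  case (insert x F)
  then have "(\<lambda>z. f x z + (\<Sum>j\<in>F. f j z)) \<in> Hinf" by (intro Hinf_add) auto
  then show ?case using insert by simp
qed

lemma pow_Hinf:
  assumes n: "n \<ge> 1" and phi: "\<phi> \<in> Hinf"
  shows "(\<lambda>z. z ^ j * \<phi> (z ^ n)) \<in> Hinf"
  unfolding Hinf_def
proof (intro CollectI conjI allI impI)
  have phiL: "\<phi> \<in> Linf" using phi by (rule Hinf_Linf)
  have [measurable]: "\<phi> \<in> borel_measurable borel" using Linf_meas[OF phiL] .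
  have "(\<lambda>z. \<phi> (1 * z ^ n)) \<in> Linf" by (rule Linf_comp[OF phiL _ n]) simp
  then show "(\<lambda>z. z ^ j * \<phi> (z ^ n)) \<in> Linf"
    by (intro Linf_mult_bdd[of _ _ 1]) (auto simp: norm_power)
  fix k :: nat assume k: "1 \<le> k"
  define p where "p = j + k"
  define G where "G z = z ^ p * \<phi> (z ^ n)" for z
  have Gm[measurable]: "G \<in> borel_measurable borel" unfolding G_def by measurable
  have "integral\<^sup>L circ (\<lambda>z. z ^ j * \<phi> (z ^ n) * z ^ k) = integral\<^sup>L circ G"
    unfolding G_def p_def by (rule Bochner_Integration.integral_cong) (auto simp: power_add)
  also have "integral\<^sup>L circ G = 0"
  proof (cases "n dvd p")
    case True
    then obtain l where l: "p = n * l" by blast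
    have l1: "l \<ge> 1" using l k unfolding p_def by (cases l) auto
    define Phi where "Phi w = \<phi> w * w ^ l" for w
    have [measurable]: "Phi \<in> borel_measurable borel" unfolding Phi_def by measurable
    have "integral\<^sup>L circ G = integral\<^sup>L circ (\<lambda>z. Phi (z ^ n))"
      unfolding G_def Phi_def l by (rule Bochner_Integration.integral_cong) (auto simp: power_mult[symmetric] mult.commute)
    also have "\<dots> = integral\<^sup>L circ Phi" by (rule circ_int_pow[symmetric, OF n]) simp
    also have "\<dots> = 0" unfolding Phi_def by (rule Hinf_coef[OF phi l1])
    finally show ?thesis .
  next
    case False
    obtain \<zeta> where z: "\<zeta> \<in> RU n" "\<zeta> ^ p \<noteq> 1" using RU_witness[OF n False] by blast
    have zn: "cmod \<zeta> = 1" by (rule RU_norm[OF n z(1)])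
    have "integral\<^sup>L circ G = integral\<^sup>L circ (\<lambda>z. G (\<zeta> * z))" by (rule circ_int_rot[OF zn Gm])
    also have "\<dots> = integral\<^sup>L circ (\<lambda>z. \<zeta> ^ p * G z)"
    proof (rule Bochner_Integration.integral_cong[OF refl])
      fix z
      have zn1: "\<zeta> ^ n = 1" using z(1) by (simp add: RU_def)
      show "G (\<zeta> * z) = \<zeta> ^ p * G z" unfolding G_def power_mult_distrib zn1 by simp
    qed
    also have "\<dots> = \<zeta> ^ p * integral\<^sup>L circ G" by simp
    finally have "(1 - \<zeta> ^ p) * integral\<^sup>L circ G = 0" by (simp add: algebra_simps)
    then show ?thesis using z(2) by simp
  qed
  finally show "integral\<^sup>L circ (\<lambda>z. z ^ j * \<phi> (z ^ n) * z ^ k) = 0" .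
qed

lemma Hinf_pow_E:
  assumes "h \<in> Hinf_pow n"
  obtains \<phi> where "\<phi> \<in> Hinf" "h = (\<lambda>z. \<phi> (z ^ n))"
  using assms unfolding Hinf_pow_def by auto

lemma Hinf_pow_meas:
  assumes "h \<in> Hinf_pow n"
  shows "h \<in> borel_measurable borel"
proof -
  obtain \<phi> where "\<phi> \<in> Hinf" "h = (\<lambda>z. \<phi> (z ^ n))" using Hinf_pow_E[OF assms] by blast
  moreover have [measurable]: "\<phi> \<in> borel_measurable borel" using calculation(1) Hinf_Linf Linf_meas by blast
  ultimately show ?thesis by simp
qed

lemma Hinf_pow_inv:
  assumes "h \<in> Hinf_pow n" "\<zeta> \<in> RU n"
  shows "h (\<zeta> * z) = h z"
proof -
  obtain \<phi> where "h = (\<lambda>z. \<phi> (z ^ n))" using Hinf_pow_E[OF assms(1)] by blast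
  then show ?thesis using assms(2) by (simp add: RU_def power_mult_distrib)
qed

definition Ej :: "nat \<Rightarrow> nat \<Rightarrow> (complex \<Rightarrow> complex) \<Rightarrow> complex \<Rightarrow> complex" where
  "Ej n j h z = (1 / of_nat n) * (\<Sum>\<omega>\<in>RU n. \<omega> ^ (n - j) * h (\<omega> * z))"

definition Hj :: "nat \<Rightarrow> nat \<Rightarrow> (complex \<Rightarrow> complex) \<Rightarrow> complex \<Rightarrow> complex" where
  "Hj n j h z = cnj z ^ j * Ej n j h z"

definition rt :: "nat \<Rightarrow> complex \<Rightarrow> complex" where
  "rt n w = exp (Ln w / of_nat n)"

definition Phi :: "nat \<Rightarrow> nat \<Rightarrow> (complex \<Rightarrow> complex) \<Rightarrow> complex \<Rightarrow> complex" where
  "Phi n j h w = Hj n j h (rt n w)"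

lemma mult_meas[measurable]: "(\<lambda>x. c * x :: complex) \<in> borel_measurable borel"
  by (intro borel_measurable_continuous_onI continuous_intros)

lemma Ej_meas[measurable]: assumes [measurable]: "h \<in> borel_measurable borel" shows "Ej n j h \<in> borel_measurable borel"
proof -
  have [measurable]: "(\<lambda>x. h (\<omega> * x)) \<in> borel_measurable borel" for \<omega>
    using measurable_comp[OF mult_meas[of \<omega>] assms] by (simp add: comp_def)
  show ?thesis unfolding Ej_def[abs_def] by measurable
qed

lemma Hj_meas[measurable]: assumes [measurable]: "h \<in> borel_measurable borel" shows "Hj n j h \<in> borel_measurable borel"
  unfolding Hj_def[abs_def] by measurable

lemma rt_meas[measurable]: "rt n \<in> borel_measurable borel"
  unfolding rt_def[abs_def] by measurable

lemma Phi_meas[measurable]: assumes [measurable]: "h \<in> borel_measurable borel" shows "Phi n j h \<in> borel_measurable borel"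
proof -
  have "Phi n j h = Hj n j h \<circ> rt n" unfolding Phi_def[abs_def] by (simp add: comp_def)
  then show ?thesis using measurable_comp[OF rt_meas Hj_meas[OF assms]] by simp
qed

lemma RU_cnj_pow: "n \<ge> 1 \<Longrightarrow> \<omega> \<in> RU n \<Longrightarrow> j \<le> n \<Longrightarrow> \<omega> ^ (n - j) = cnj \<omega> ^ j"
proof -
  assume n: "n \<ge> 1" and w: "\<omega> \<in> RU n" and j: "j \<le> n"
  have wc: "\<omega> * cnj \<omega> = 1" using cnj_mult_1[OF RU_norm[OF n w]] .
  have "\<omega> ^ (n - j) = \<omega> ^ (n - j) * (\<omega> * cnj \<omega>) ^ j" using wc by simp
  also have "\<dots> = \<omega> ^ (n - j + j) * cnj \<omega> ^ j" by (simp add: power_mult_distrib power_add mult.assoc)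
  also have "n - j + j = n" using j by simp
  finally show ?thesis using w by (simp add: RU_def)
qed

lemma Ej_shift:
  assumes n: "n \<ge> 1" and z: "\<zeta> \<in> RU n"
  shows "Ej n j h (\<zeta> * x) = cnj \<zeta> ^ (n - j) * Ej n j h x"
proof -
  have zc: "\<zeta> * cnj \<zeta> = 1" using cnj_mult_1[OF RU_norm[OF n z]] .
  define f where "f \<omega> = (\<omega> * cnj \<zeta>) ^ (n - j) * h (\<omega> * x)" for \<omega>
  have "(\<Sum>\<omega>\<in>RU n. \<omega> ^ (n - j) * h (\<omega> * (\<zeta> * x))) = (\<Sum>\<omega>\<in>RU n. f (\<omega> * \<zeta>))"
  proof (rule sum.cong[OF refl])
    fix \<omega>
    have e: "\<omega> * \<zeta> * cnj \<zeta> = \<omega>" using zc by (simp add: mult.assoc)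
    show "\<omega> ^ (n - j) * h (\<omega> * (\<zeta> * x)) = f (\<omega> * \<zeta>)" unfolding f_def e by (simp add: mult.assoc)
  qed
  also have "\<dots> = (\<Sum>\<omega>\<in>RU n. f \<omega>)" by (rule RU_shift[OF n z])
  also have "\<dots> = cnj \<zeta> ^ (n - j) * (\<Sum>\<omega>\<in>RU n. \<omega> ^ (n - j) * h (\<omega> * x))"
    unfolding f_def by (simp add: sum_distrib_left power_mult_distrib algebra_simps)
  finally show ?thesis unfolding Ej_def by simp
qed

lemma Hj_inv:
  assumes n: "n \<ge> 1" and z: "\<zeta> \<in> RU n" and j: "j \<le> n"
  shows "Hj n j h (\<zeta> * x) = Hj n j h x"
proof -
  have "cnj \<zeta> ^ j * cnj \<zeta> ^ (n - j) = cnj (\<zeta> ^ n)" using j by (simp add: power_add[symmetric])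
  also have "\<dots> = 1" using z by (simp add: RU_def)
  finally have c: "cnj \<zeta> ^ j * cnj \<zeta> ^ (n - j) = 1" .
  have "Hj n j h (\<zeta> * x) = (cnj \<zeta> ^ j * cnj \<zeta> ^ (n - j)) * (cnj x ^ j * Ej n j h x)"
    unfolding Hj_def Ej_shift[OF n z] by (simp add: power_mult_distrib algebra_simps)
  then show ?thesis using c unfolding Hj_def by simp
qed

lemma sum_Ej:
  assumes n: "n \<ge> 1"
  shows "(\<Sum>j<n. Ej n j h x) = h x"
proof -
  have geo: "(\<Sum>j<n. \<omega> ^ (n - j)) = (if \<omega> = 1 then of_nat n else 0)" if w: "\<omega> \<in> RU n" for \<omega>
  proof -
    have "(\<Sum>j<n. \<omega> ^ (n - j)) = (\<Sum>j<n. cnj \<omega> ^ j)"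
      by (rule sum.cong[OF refl]) (use RU_cnj_pow[OF n w] in auto)
    also have "\<dots> = (if \<omega> = 1 then of_nat n else 0)"
    proof (cases "\<omega> = 1")
      case True then show ?thesis by simp
    next
      case False
      then have "cnj \<omega> \<noteq> 1" by (metis complex_cnj_cnj complex_cnj_one)
      moreover have "cnj \<omega> ^ n = 1" using w by (metis RU_def complex_cnj_one complex_cnj_power mem_Collect_eq)
      ultimately show ?thesis using False by (simp add: geometric_sum)
    qed
    finally show ?thesis .
  qed
  have "(\<Sum>j<n. Ej n j h x) = (1 / of_nat n) * (\<Sum>\<omega>\<in>RU n. (\<Sum>j<n. \<omega> ^ (n - j)) * h (\<omega> * x))"
    unfolding Ej_def by (simp add: sum_distrib_left sum_distrib_right sum.swap[of _ "RU n"] mult.assoc)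
  also have "\<dots> = (1 / of_nat n) * (\<Sum>\<omega>\<in>RU n. (if \<omega> = 1 then of_nat n * h x else 0))"
    by (intro arg_cong[where f = "\<lambda>t. (1 / of_nat n) * t"] sum.cong[OF refl]) (auto simp: geo)
  also have "\<dots> = h x" using RU_finite[OF n] n by (simp add: RU_def)
  finally show ?thesis .
qed

lemma rt_pow: "w \<noteq> 0 \<Longrightarrow> n \<ge> 1 \<Longrightarrow> rt n w ^ n = w"
  unfolding rt_def by (simp add: exp_of_nat_mult[symmetric])

lemma Phi_on_T:
  assumes n: "n \<ge> 1" and j: "j \<le> n" and z: "cmod x = 1"
  shows "Phi n j h (x ^ n) = Hj n j h x"
proof -
  have x0: "x \<noteq> 0" using z by auto
  have xc: "x * cnj x = 1" using cnj_mult_1[OF z] .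
  define \<zeta> where "\<zeta> = rt n (x ^ n) * cnj x"
  have "\<zeta> ^ n = rt n (x ^ n) ^ n * cnj x ^ n" unfolding \<zeta>_def by (simp add: power_mult_distrib)
  also have "\<dots> = x ^ n * cnj x ^ n" using rt_pow[of "x ^ n" n] x0 n by simp
  also have "\<dots> = 1" using xc by (simp add: power_mult_distrib[symmetric])
  finally have zR: "\<zeta> \<in> RU n" unfolding RU_def by simp
  have "rt n (x ^ n) = \<zeta> * x" unfolding \<zeta>_def using xc by (simp add: mult.assoc mult.commute[of "cnj x"])
  then show ?thesis unfolding Phi_def using Hj_inv[OF n zR j] by simp
qed


lemma rot_coef:
  assumes h: "h \<in> Hinf" and m: "m \<ge> 1" and w: "cmod \<omega> = 1"
  shows "integral\<^sup>L circ (\<lambda>z. h (\<omega> * z) * z ^ m) = 0"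
proof -
  have [measurable]: "h \<in> borel_measurable borel" using h Hinf_Linf Linf_meas by blast
  have wc: "\<omega> * cnj \<omega> = 1" using cnj_mult_1[OF w] .
  have cw: "cmod (cnj \<omega>) = 1" using w by simp
  have "integral\<^sup>L circ (\<lambda>z. h (\<omega> * z) * z ^ m) = integral\<^sup>L circ (\<lambda>z. h (\<omega> * (cnj \<omega> * z)) * (cnj \<omega> * z) ^ m)"
    by (rule circ_int_rot[OF cw, of "\<lambda>z. h (\<omega> * z) * z ^ m"]) measurable
  also have "\<dots> = integral\<^sup>L circ (\<lambda>z. cnj \<omega> ^ m * (h z * z ^ m))"
  proof (rule Bochner_Integration.integral_cong[OF refl])
    fix z
    have e: "\<omega> * (cnj \<omega> * z) = z" using wc by (simp add: mult.assoc[symmetric])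
    show "h (\<omega> * (cnj \<omega> * z)) * (cnj \<omega> * z) ^ m = cnj \<omega> ^ m * (h z * z ^ m)"
      unfolding e by (simp add: power_mult_distrib)
  qed
  also have "\<dots> = cnj \<omega> ^ m * integral\<^sup>L circ (\<lambda>z. h z * z ^ m)" by simp
  also have "\<dots> = 0" using Hinf_coef[OF h m] by simp
  finally show ?thesis .
qed

lemma Linf_rot: "h \<in> Linf \<Longrightarrow> cmod \<omega> = 1 \<Longrightarrow> (\<lambda>z. h (\<omega> * z)) \<in> Linf"
  using Linf_comp[of h \<omega> 1] by simp

lemma Ej_coef:
  assumes n: "n \<ge> 1" and h: "h \<in> Hinf" and m: "m \<ge> 1"
  shows "integral\<^sup>L circ (\<lambda>z. Ej n j h z * z ^ m) = 0"
proof -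
  have hL: "h \<in> Linf" using h by (rule Hinf_Linf)
  have int: "integrable circ (\<lambda>z. \<omega> ^ (n - j) * (h (\<omega> * z) * z ^ m))" if "\<omega> \<in> RU n" for \<omega>
  proof -
    have "(\<lambda>z. h (\<omega> * z)) \<in> Linf" by (rule Linf_rot[OF hL RU_norm[OF n that]])
    from Linf_int_pow[OF this, of m] show ?thesis by (rule integrable_mult_right)
  qed
  have "integral\<^sup>L circ (\<lambda>z. Ej n j h z * z ^ m)
      = integral\<^sup>L circ (\<lambda>z. (1 / of_nat n) * (\<Sum>\<omega>\<in>RU n. \<omega> ^ (n - j) * (h (\<omega> * z) * z ^ m)))"
    unfolding Ej_def by (rule Bochner_Integration.integral_cong[OF refl]) (simp add: sum_distrib_right mult.assoc)
  also have "\<dots> = (1 / of_nat n) * integral\<^sup>L circ (\<lambda>z. \<Sum>\<omega>\<in>RU n. \<omega> ^ (n - j) * (h (\<omega> * z) * z ^ m))"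
    by (rule integral_mult_right_zero)
  also have "integral\<^sup>L circ (\<lambda>z. \<Sum>\<omega>\<in>RU n. \<omega> ^ (n - j) * (h (\<omega> * z) * z ^ m))
      = (\<Sum>\<omega>\<in>RU n. integral\<^sup>L circ (\<lambda>z. \<omega> ^ (n - j) * (h (\<omega> * z) * z ^ m)))"
    by (rule Bochner_Integration.integral_sum) (use int in auto)
  also have "\<dots> = (\<Sum>\<omega>\<in>RU n. \<omega> ^ (n - j) * integral\<^sup>L circ (\<lambda>z. h (\<omega> * z) * z ^ m))"
    by simp
  also have "\<dots> = 0" using rot_coef[OF h m] RU_norm[OF n] by simp
  finally show ?thesis by simp
qed

lemma Phi_Hinf:
  assumes n: "n \<ge> 1" and j: "j < n" and h: "h \<in> Hinf"
  shows "Phi n j h \<in> Hinf"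
  unfolding Hinf_def
proof (intro CollectI conjI allI impI)
  have hL: "h \<in> Linf" using h by (rule Hinf_Linf)
  obtain C where hm[measurable]: "h \<in> borel_measurable borel" and C: "AE z in circ. cmod (h z) \<le> C"
    using Linf_E[OF hL] by blast
  have "AE z in circ. cmod (h (\<omega> * z)) \<le> C" if "\<omega> \<in> RU n" for \<omega>
    using C circ_AE_rot[OF RU_norm[OF n that], of "\<lambda>w. cmod (h w) \<le> C"] by simp
  then have C2: "AE z in circ. \<forall>\<omega>\<in>RU n. cmod (h (\<omega> * z)) \<le> C"
    by (rule AE_finite_allI[OF RU_finite[OF n]])
  have "AE z in circ. cmod (Phi n j h (z ^ n)) \<le> C"
    using C2 AE_circ_T
  proof eventually_elim
    case (elim z)
    have "Phi n j h (z ^ n) = Hj n j h z" using Phi_on_T[OF n _ elim(2)] j by simp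
    also have "cmod (Hj n j h z) = cmod (Ej n j h z)" unfolding Hj_def using elim(2) by (simp add: norm_mult norm_power)
    also have "\<dots> = (1 / real n) * cmod (\<Sum>\<omega>\<in>RU n. \<omega> ^ (n - j) * h (\<omega> * z))"
      unfolding Ej_def by (simp add: norm_mult norm_divide)
    also have "\<dots> \<le> (1 / real n) * (\<Sum>\<omega>\<in>RU n. cmod (\<omega> ^ (n - j) * h (\<omega> * z)))"
      by (rule mult_left_mono[OF norm_sum]) simp
    also have "\<dots> \<le> (1 / real n) * (\<Sum>\<omega>\<in>RU n. C)"
    proof (intro mult_left_mono sum_mono)
      fix \<omega> assume "\<omega> \<in> RU n"
      then show "cmod (\<omega> ^ (n - j) * h (\<omega> * z)) \<le> C" using elim(1) RU_norm[OF n]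
        by (simp add: norm_mult norm_power)
    qed simp
    also have "\<dots> = C" using RU_card[OF n] n by simp
    finally show ?case .
  qed
  then have "AE w in circ. cmod (Phi n j h w) \<le> C"
    using circ_AE_pow[OF n, of "\<lambda>w. cmod (Phi n j h w) \<le> C"] by simp
  then show "Phi n j h \<in> Linf" unfolding Linf_def by auto
  fix k :: nat assume k: "1 \<le> k"
  have "integral\<^sup>L circ (\<lambda>w. Phi n j h w * w ^ k) = integral\<^sup>L circ (\<lambda>z. Phi n j h (z ^ n) * (z ^ n) ^ k)"
    by (rule circ_int_pow[OF n]) measurable
  also have "\<dots> = integral\<^sup>L circ (\<lambda>z. Ej n j h z * z ^ (n * k - j))"
  proof (rule integral_cong_AE)
    show "AE z in circ. Phi n j h (z ^ n) * (z ^ n) ^ k = Ej n j h z * z ^ (n * k - j)"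
      using AE_circ_T
    proof eventually_elim
      case (elim z)
      have "n \<le> n * k" using k by simp
      then have jn: "j \<le> n * k" using j by linarith
      have zc: "cnj z * z = 1" using cnj_mult_1'[OF elim] .
      have "Phi n j h (z ^ n) * (z ^ n) ^ k = cnj z ^ j * Ej n j h z * z ^ (n * k - j + j)"
        using Phi_on_T[OF n _ elim] j jn by (simp add: Hj_def power_mult)
      also have "\<dots> = (cnj z * z) ^ j * Ej n j h z * z ^ (n * k - j)"
        by (simp add: power_add power_mult_distrib algebra_simps)
      also have "\<dots> = Ej n j h z * z ^ (n * k - j)" using zc by simp
      finally show ?case .
    qed
  qed measurable
  also have "\<dots> = 0"
  proof (rule Ej_coef[OF n h])
    have "n \<le> n * k" using k by simp
    then show "1 \<le> n * k - j" using j by linarith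
  qed
  finally show "integral\<^sup>L circ (\<lambda>w. Phi n j h w * w ^ k) = 0" .
qed

lemma tends0_iff:
  fixes X :: "nat \<Rightarrow> ereal"
  assumes nn: "\<And>k. 0 \<le> X k"
  shows "(X \<longlonglongrightarrow> 0) \<longleftrightarrow> (\<forall>e>0. \<exists>K. \<forall>k\<ge>K. X k < ereal e)"
proof
  assume "X \<longlonglongrightarrow> 0"
  then have "\<forall>u>0. eventually (\<lambda>k. X k < u) sequentially" by (simp add: order_tendsto_iff)
  then show "\<forall>e>0. \<exists>K. \<forall>k\<ge>K. X k < ereal e" by (auto simp: eventually_sequentially)
next
  assume H: "\<forall>e>0. \<exists>K. \<forall>k\<ge>K. X k < ereal e"
  show "X \<longlonglongrightarrow> 0"
    unfolding order_tendsto_iff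
  proof (intro conjI allI impI)
    fix l :: ereal assume "l < 0"
    then show "eventually (\<lambda>k. l < X k) sequentially"
      by (intro always_eventually allI) (rule less_le_trans[OF _ nn])
  next
    fix u :: ereal assume u: "0 < u"
    obtain e where e: "0 < e" "ereal e \<le> u"
    proof (cases u)
      case (real r) then show ?thesis using u that[of r] by auto
    next
      case PInf then show ?thesis using that[of 1] by auto
    next
      case MInf then show ?thesis using u by auto
    qed
    from H e(1) obtain K where "\<forall>k\<ge>K. X k < ereal e" by blast
    then show "eventually (\<lambda>k. X k < u) sequentially"
      unfolding eventually_sequentially using e(2) by (auto intro: less_le_trans)
  qed
qed

lemma sum_le_bound:
  fixes x :: "'i \<Rightarrow> ereal"
  assumes "finite A" "\<And>i. i \<in> A \<Longrightarrow> x i \<le> ereal c"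
  shows "(\<Sum>i\<in>A. x i) \<le> ereal (real (card A) * c)"
  using assms
proof (induction A rule: finite_induct)
  case empty then show ?case by simp
next
  case (insert a F)
  have "(\<Sum>i\<in>insert a F. x i) = x a + (\<Sum>i\<in>F. x i)" using insert by simp
  also have "\<dots> \<le> ereal c + ereal (real (card F) * c)"
    using insert by (intro add_mono) auto
  also have "\<dots> = ereal (real (card (insert a F)) * c)" using insert by (simp add: algebra_simps)
  finally show ?case .
qed

context rsn begin

lemma closure_char:
  "f \<in> alpha_closure \<alpha> S \<longleftrightarrow> f \<in> borel_measurable borel \<and>
     (\<exists>h. (\<forall>k::nat. h k \<in> S) \<and> (\<forall>e>0. \<exists>K. \<forall>k\<ge>K. alpha_ext \<alpha> (\<lambda>z. f z - h k z) < ereal e))"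
proof -
  have "((\<lambda>k. alpha_ext \<alpha> (\<lambda>z. f z - h k z)) \<longlonglongrightarrow> 0) \<longleftrightarrow>
     (\<forall>e>0. \<exists>K. \<forall>k\<ge>K. alpha_ext \<alpha> (\<lambda>z. f z - h k z) < ereal e)" for h
    by (rule tends0_iff[OF ext_nonneg])
  note eq = this
  show ?thesis unfolding alpha_closure_def mem_Collect_eq measurable_circ1 eq ..
qed

lemma ext_sum:
  assumes "finite A" "\<And>i. i \<in> A \<Longrightarrow> F i \<in> borel_measurable borel"
  shows "alpha_ext \<alpha> (\<lambda>z. \<Sum>i\<in>A. F i z) \<le> (\<Sum>i\<in>A. alpha_ext \<alpha> (F i))"
  using assms
proof (induction A rule: finite_induct)
  case empty then show ?case by (simp add: ext_zero_fun)
next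
  case (insert a A)
  have m: "(\<lambda>z. \<Sum>i\<in>A. F i z) \<in> borel_measurable borel"
    using insert by (intro borel_measurable_sum) auto
  have "alpha_ext \<alpha> (\<lambda>z. \<Sum>i\<in>insert a A. F i z) = alpha_ext \<alpha> (\<lambda>z. F a z + (\<Sum>i\<in>A. F i z))"
    using insert by simp
  also have "\<dots> \<le> alpha_ext \<alpha> (F a) + alpha_ext \<alpha> (\<lambda>z. \<Sum>i\<in>A. F i z)"
    by (rule ext_add) (use insert m in auto)
  also have "\<dots> \<le> alpha_ext \<alpha> (F a) + (\<Sum>i\<in>A. alpha_ext \<alpha> (F i))"
    using insert by (intro add_left_mono) auto
  also have "\<dots> = (\<Sum>i\<in>insert a A. alpha_ext \<alpha> (F i))" using insert by simp
  finally show ?case .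
qed

lemma comp_mult_meas[measurable]:
  assumes [measurable]: "D \<in> borel_measurable borel"
  shows "(\<lambda>z. D ((c::complex) * z)) \<in> borel_measurable borel"
  using measurable_comp[OF mult_meas[of c] assms] by (simp add: comp_def)

lemma ext_Ej:
  assumes n: "n \<ge> 1" and Dm[measurable]: "D \<in> borel_measurable borel" and c: "alpha_ext \<alpha> D \<le> ereal c"
  shows "alpha_ext \<alpha> (Ej n j D) \<le> ereal (real n * c)"
proof -
  have "Ej n j D = (\<lambda>z. \<Sum>\<omega>\<in>RU n. (1 / of_nat n) * \<omega> ^ (n - j) * D (\<omega> * z))"
    unfolding Ej_def by (simp add: fun_eq_iff sum_distrib_left mult.assoc)
  then have "alpha_ext \<alpha> (Ej n j D) \<le> (\<Sum>\<omega>\<in>RU n. alpha_ext \<alpha> (\<lambda>z. (1 / of_nat n) * \<omega> ^ (n - j) * D (\<omega> * z)))"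
    using ext_sum[OF RU_finite[OF n], of "\<lambda>\<omega> z. (1 / of_nat n) * \<omega> ^ (n - j) * D (\<omega> * z)"] by simp
  also have "\<dots> \<le> ereal (real (card (RU n)) * c)"
  proof (rule sum_le_bound[OF RU_finite[OF n]])
    fix \<omega> assume w: "\<omega> \<in> RU n"
    have wn: "cmod \<omega> = 1" using RU_norm[OF n w] .
    have "alpha_ext \<alpha> (\<lambda>z. (1 / of_nat n) * \<omega> ^ (n - j) * D (\<omega> * z)) \<le> alpha_ext \<alpha> (\<lambda>z. D (\<omega> * z))"
    proof (rule ext_mono_pw)
      fix z
      have "cmod ((1 / of_nat n) * \<omega> ^ (n - j) * D (\<omega> * z)) = (1 / real n) * cmod (D (\<omega> * z))"
        using wn by (simp add: norm_mult norm_power norm_divide)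
      also have "\<dots> \<le> 1 * cmod (D (\<omega> * z))" using n by (intro mult_right_mono) auto
      finally show "cmod ((1 / of_nat n) * \<omega> ^ (n - j) * D (\<omega> * z)) \<le> cmod (D (\<omega> * z))" by simp
    qed
    also have "\<dots> \<le> alpha_ext \<alpha> D" by (rule ext_rot[OF wn])
    finally show "alpha_ext \<alpha> (\<lambda>z. (1 / of_nat n) * \<omega> ^ (n - j) * D (\<omega> * z)) \<le> ereal c" using c by simp
  qed
  also have "\<dots> = ereal (real n * c)" using RU_card[OF n] by simp
  finally show ?thesis .
qed

end

context rsn begin

lemma Hj_diff: "Hj n j f z - Hj n j h z = cnj z ^ j * Ej n j (\<lambda>z. f z - h z) z"
proof -
  have s: "(\<Sum>\<omega>\<in>RU n. \<omega> ^ (n - j) * (f (\<omega> * z) - h (\<omega> * z))) =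
     (\<Sum>\<omega>\<in>RU n. \<omega> ^ (n - j) * f (\<omega> * z)) - (\<Sum>\<omega>\<in>RU n. \<omega> ^ (n - j) * h (\<omega> * z))"
    by (simp add: right_diff_distrib sum_subtractf)
  have "Ej n j f z - Ej n j h z = Ej n j (\<lambda>z. f z - h z) z"
    unfolding Ej_def s by (simp add: diff_divide_distrib)
  then show ?thesis unfolding Hj_def by (simp add: right_diff_distrib[symmetric])
qed

lemma part1:
  assumes n: "n \<ge> 1" and f: "f \<in> H_alpha \<alpha>"
  shows "\<exists>g. (\<forall>j<n. g j \<in> M_alpha \<alpha> n) \<and> (AE z in circ. f z = (\<Sum>j<n. z ^ j * g j z))"
proof -
  have "f \<in> alpha_closure \<alpha> Hinf" using f unfolding H_alpha_def .
  then have "f \<in> borel_measurable borel \<and> (\<exists>h. (\<forall>k::nat. h k \<in> Hinf) \<and> (\<forall>e>0. \<exists>K. \<forall>k\<ge>K. alpha_ext \<alpha> (\<lambda>z. f z - h k z) < ereal e))"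
    unfolding closure_char .
  then obtain h :: "nat \<Rightarrow> complex \<Rightarrow> complex" where fm[measurable]: "f \<in> borel_measurable borel" and hH: "\<And>k. h k \<in> Hinf"
    and conv: "\<forall>e>0. \<exists>K. \<forall>k\<ge>K. alpha_ext \<alpha> (\<lambda>z. f z - h k z) < ereal e"
    by blast
  have hm[measurable]: "h k \<in> borel_measurable borel" for k by (rule Linf_meas[OF Hinf_Linf[OF hH]])
  define g where "g j = Hj n j f" for j
  have "g j \<in> M_alpha \<alpha> n" if j: "j < n" for j
    unfolding M_alpha_def closure_char
  proof (intro conjI exI[of _ "\<lambda>k z. Phi n j (h k) (z ^ n)"] allI impI)
    show "g j \<in> borel_measurable borel" unfolding g_def by measurable
    fix k show "(\<lambda>z. Phi n j (h k) (z ^ n)) \<in> Hinf_pow n"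
      unfolding Hinf_pow_def using Phi_Hinf[OF n j hH] by blast
  next
    fix e :: real assume e: "0 < e"
    then have "0 < e / (2 * real n)" using n by simp
    with conv obtain K where K: "\<And>k. k \<ge> K \<Longrightarrow> alpha_ext \<alpha> (\<lambda>z. f z - h k z) < ereal (e / (2 * real n))"
      by blast
    show "\<exists>K. \<forall>k\<ge>K. alpha_ext \<alpha> (\<lambda>z. g j z - Phi n j (h k) (z ^ n)) < ereal e"
    proof (intro exI allI impI)
      fix k assume k: "K \<le> k"
      have "alpha_ext \<alpha> (\<lambda>z. g j z - Phi n j (h k) (z ^ n)) = alpha_ext \<alpha> (Ej n j (\<lambda>z. f z - h k z))"
      proof (rule ext_cong_AE)
        show "(\<lambda>z. g j z - Phi n j (h k) (z ^ n)) \<in> borel_measurable borel" unfolding g_def by measurable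
        show "Ej n j (\<lambda>z. f z - h k z) \<in> borel_measurable borel" by measurable
        show "AE z in circ. cmod (g j z - Phi n j (h k) (z ^ n)) = cmod (Ej n j (\<lambda>z. f z - h k z) z)"
          using AE_circ_T
        proof eventually_elim
          case (elim z)
          have "g j z - Phi n j (h k) (z ^ n) = cnj z ^ j * Ej n j (\<lambda>z. f z - h k z) z"
            unfolding g_def using Phi_on_T[OF n _ elim] j Hj_diff by simp
          then show ?case using elim by (simp add: norm_mult norm_power)
        qed
      qed
      also have "\<dots> \<le> ereal (real n * (e / (2 * real n)))"
        by (rule ext_Ej[OF n _ less_imp_le[OF K[OF k]]]) measurable
      also have "\<dots> < ereal e" using n e by simp
      finally show "alpha_ext \<alpha> (\<lambda>z. g j z - Phi n j (h k) (z ^ n)) < ereal e" .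
    qed
  qed
  moreover have "AE z in circ. f z = (\<Sum>j<n. z ^ j * g j z)"
    using AE_circ_T
  proof eventually_elim
    case (elim z)
    have zc: "z * cnj z = 1" using cnj_mult_1[OF elim] .
    have "(\<Sum>j<n. z ^ j * g j z) = (\<Sum>j<n. (z * cnj z) ^ j * Ej n j f z)"
      unfolding g_def Hj_def by (simp add: power_mult_distrib mult.assoc)
    also have "\<dots> = f z" using sum_Ej[OF n] zc by simp
    finally show ?case by simp
  qed
  ultimately show ?thesis by (intro exI[of _ g]) simp
qed

end

context rsn begin

lemma part2:
  assumes n: "n \<ge> 1" and g: "\<forall>j<n. g j \<in> M_alpha \<alpha> n"
  shows "(\<lambda>z. \<Sum>j<n. z ^ j * g j z) \<in> H_alpha \<alpha>"
proof -
  have "\<forall>j\<in>{..<n}. g j \<in> borel_measurable borel \<and> (\<exists>H. (\<forall>k::nat. H k \<in> Hinf_pow n) \<and>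
      (\<forall>e>0. \<exists>K. \<forall>k\<ge>K. alpha_ext \<alpha> (\<lambda>z. g j z - H k z) < ereal e))"
    using g unfolding M_alpha_def closure_char by blast
  then have gm[measurable]: "j < n \<Longrightarrow> g j \<in> borel_measurable borel" for j by blast
  have "\<forall>j\<in>{..<n}. \<exists>H. (\<forall>k::nat. H k \<in> Hinf_pow n) \<and>
      (\<forall>e>0. \<exists>K. \<forall>k\<ge>K. alpha_ext \<alpha> (\<lambda>z. g j z - H k z) < ereal e)"
    using \<open>\<forall>j\<in>{..<n}. _\<close> by blast
  from bchoice[OF this] obtain HH :: "nat \<Rightarrow> nat \<Rightarrow> complex \<Rightarrow> complex" where
    HH: "\<forall>j\<in>{..<n}. (\<forall>k::nat. HH j k \<in> Hinf_pow n) \<and>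
      (\<forall>e>0. \<exists>K. \<forall>k\<ge>K. alpha_ext \<alpha> (\<lambda>z. g j z - HH j k z) < ereal e)" by blast
  have HHP: "j < n \<Longrightarrow> HH j k \<in> Hinf_pow n" for j k using HH by blast
  have HHm[measurable]: "j < n \<Longrightarrow> HH j k \<in> borel_measurable borel" for j k
    using Hinf_pow_meas[OF HHP] by blast
  define A where "A k z = (\<Sum>j<n. z ^ j * HH j k z)" for k z
  have AH: "A k \<in> Hinf" for k
    unfolding A_def[abs_def]
  proof (rule Hinf_sum)
    fix j assume "j \<in> {..<n}"
    then obtain \<phi> where "\<phi> \<in> Hinf" "HH j k = (\<lambda>z. \<phi> (z ^ n))" using Hinf_pow_E[OF HHP] by blast
    then show "(\<lambda>z. z ^ j * HH j k z) \<in> Hinf" using pow_Hinf[OF n] by simp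
  qed simp
  show ?thesis
    unfolding H_alpha_def closure_char
  proof (intro conjI exI[of _ A] allI impI)
    show "(\<lambda>z. \<Sum>j<n. z ^ j * g j z) \<in> borel_measurable borel"
      by (intro borel_measurable_sum) (use gm in auto)
    fix k show "A k \<in> Hinf" by (rule AH)
  next
    fix e :: real assume e: "0 < e"
    define c where "c = e / (2 * real n)"
    have c0: "0 < c" unfolding c_def using e n by simp
    have "\<forall>j\<in>{..<n}. eventually (\<lambda>k. alpha_ext \<alpha> (\<lambda>z. g j z - HH j k z) < ereal c) sequentially"
      using HH c0 unfolding eventually_sequentially by blast
    then have "eventually (\<lambda>k. \<forall>j\<in>{..<n}. alpha_ext \<alpha> (\<lambda>z. g j z - HH j k z) < ereal c) sequentially"
      by (rule eventually_ball_finite[OF finite_lessThan])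
    then obtain K where K: "\<And>k j. k \<ge> K \<Longrightarrow> j < n \<Longrightarrow> alpha_ext \<alpha> (\<lambda>z. g j z - HH j k z) < ereal c"
      unfolding eventually_sequentially by blast
    show "\<exists>K. \<forall>k\<ge>K. alpha_ext \<alpha> (\<lambda>z. (\<Sum>j<n. z ^ j * g j z) - A k z) < ereal e"
    proof (intro exI allI impI)
      fix k assume k: "K \<le> k"
      have eq: "(\<lambda>z. (\<Sum>j<n. z ^ j * g j z) - A k z) = (\<lambda>z. \<Sum>j<n. z ^ j * (g j z - HH j k z))"
        unfolding A_def by (simp add: fun_eq_iff right_diff_distrib sum_subtractf)
      have "alpha_ext \<alpha> (\<lambda>z. \<Sum>j<n. z ^ j * (g j z - HH j k z)) \<le> (\<Sum>j<n. alpha_ext \<alpha> (\<lambda>z. z ^ j * (g j z - HH j k z)))"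
        by (rule ext_sum) auto
      also have "\<dots> \<le> ereal (real (card {..<n}) * c)"
      proof (rule sum_le_bound)
        fix j assume j: "j \<in> {..<n}"
        have "alpha_ext \<alpha> (\<lambda>z. z ^ j * (g j z - HH j k z)) \<le> alpha_ext \<alpha> (\<lambda>z. g j z - HH j k z)"
        proof (rule ext_mono_AE)
          show "AE z in circ. cmod (z ^ j * (g j z - HH j k z)) \<le> cmod (g j z - HH j k z)"
            using AE_circ_T by eventually_elim (simp add: norm_mult norm_power)
        qed (use j in auto)
        also have "\<dots> \<le> ereal c" using K[OF k] j by (simp add: less_imp_le)
        finally show "alpha_ext \<alpha> (\<lambda>z. z ^ j * (g j z - HH j k z)) \<le> ereal c" .
      qed simp
      also have "\<dots> < ereal e" using e n unfolding c_def by simp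
      finally show "alpha_ext \<alpha> (\<lambda>z. (\<Sum>j<n. z ^ j * g j z) - A k z) < ereal e" unfolding eq .
    qed
  qed
qed


lemma M_inv:
  assumes n: "n \<ge> 1" and g: "g \<in> M_alpha \<alpha> n" and z: "\<zeta> \<in> RU n"
  shows "AE x in circ. g (\<zeta> * x) = g x"
proof -
  have "g \<in> borel_measurable borel \<and> (\<exists>h. (\<forall>k::nat. h k \<in> Hinf_pow n) \<and>
      (\<forall>e>0. \<exists>K. \<forall>k\<ge>K. alpha_ext \<alpha> (\<lambda>z. g z - h k z) < ereal e))"
    using g unfolding M_alpha_def closure_char .
  then obtain h :: "nat \<Rightarrow> complex \<Rightarrow> complex" where gm[measurable]: "g \<in> borel_measurable borel"
    and hP: "\<And>k. h k \<in> Hinf_pow n"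
    and conv: "\<forall>e>0. \<exists>K. \<forall>k\<ge>K. alpha_ext \<alpha> (\<lambda>z. g z - h k z) < ereal e" by blast
  have hm[measurable]: "h k \<in> borel_measurable borel" for k by (rule Hinf_pow_meas[OF hP])
  have zn: "cmod \<zeta> = 1" by (rule RU_norm[OF n z])
  have "alpha_ext \<alpha> (\<lambda>x. g (\<zeta> * x) - g x) \<le> 0"
  proof (rule ereal_le_epsilon2)
    fix e :: real assume e: "0 < e"
    then obtain K where K: "alpha_ext \<alpha> (\<lambda>z. g z - h K z) < ereal (e / 2)"
      using conv by (metis half_gt_zero order_refl)
    have eq: "(\<lambda>x. g (\<zeta> * x) - g x) = (\<lambda>x. (g (\<zeta> * x) - h K (\<zeta> * x)) + (h K x - g x))"
      using Hinf_pow_inv[OF hP z] by (simp add: fun_eq_iff)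
    have "alpha_ext \<alpha> (\<lambda>x. g (\<zeta> * x) - g x) \<le> alpha_ext \<alpha> (\<lambda>x. g (\<zeta> * x) - h K (\<zeta> * x)) + alpha_ext \<alpha> (\<lambda>x. h K x - g x)"
      unfolding eq by (rule ext_add) measurable
    also have "alpha_ext \<alpha> (\<lambda>x. g (\<zeta> * x) - h K (\<zeta> * x)) \<le> alpha_ext \<alpha> (\<lambda>z. g z - h K z)"
      using ext_rot[OF zn, of "\<lambda>z. g z - h K z"] by simp
    also have "alpha_ext \<alpha> (\<lambda>x. h K x - g x) \<le> alpha_ext \<alpha> (\<lambda>z. g z - h K z)"
      by (rule ext_mono_pw) (simp add: norm_minus_commute)
    also have "alpha_ext \<alpha> (\<lambda>z. g z - h K z) + alpha_ext \<alpha> (\<lambda>z. g z - h K z) \<le> ereal (e / 2) + ereal (e / 2)"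
      using K by (intro add_mono) auto
    also have "\<dots> = 0 + ereal e" by simp
    finally show "alpha_ext \<alpha> (\<lambda>x. g (\<zeta> * x) - g x) \<le> 0 + ereal e" by - (simp_all add: add_mono)
  qed
  from ext_zero[OF _ this] show ?thesis by simp
qed

lemma dvd_shift:
  fixes i j n :: nat
  assumes i: "i < n" and j: "j < n"
  shows "n dvd (n - i + j) \<longleftrightarrow> i = j"
proof
  assume "i = j" then have "n - i + j = n" using i by arith
  then show "n dvd (n - i + j)" by simp
next
  assume "n dvd (n - i + j)"
  then obtain q where q: "n - i + j = n * q" by blast
  have lo: "0 < n - i + j" using i by simp
  have hi: "n - i + j < 2 * n" using i j by simp
  have "q = 1"
  proof (cases q)
    case 0 then show ?thesis using q lo by simp
  next
    case (Suc q')
    show ?thesis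
    proof (cases q')
      case 0 then show ?thesis using Suc by simp
    next
      case (Suc q'')
      then have "n * q \<ge> 2 * n" using \<open>q = Suc q'\<close> by simp
      then show ?thesis using q hi by simp
    qed
  qed
  then show "i = j" using q i by simp
qed

lemma part3:
  assumes n: "n \<ge> 1" and g: "\<forall>j<n. g j \<in> M_alpha \<alpha> n"
    and S: "AE z in circ. (\<Sum>j<n. z ^ j * g j z) = 0"
  shows "\<forall>j<n. AE z in circ. z ^ j * g j z = 0"
proof (intro allI impI)
  fix i assume i: "i < n"
  have gm[measurable]: "g j \<in> borel_measurable borel" if "j < n" for j
    using g that unfolding M_alpha_def alpha_closure_def by auto
  have fm: "(\<lambda>w. \<Sum>j<n. w ^ j * g j w) \<in> borel_measurable borel"
    by (intro borel_measurable_sum) (use gm in auto)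
  have "{w. (\<Sum>j<n. w ^ j * g j w) = 0} = (\<lambda>w. \<Sum>j<n. w ^ j * g j w) -` {0}" by auto
  then have Sm: "{w. (\<Sum>j<n. w ^ j * g j w) = 0} \<in> sets borel"
    using measurable_sets_borel[OF fm, of "{0}"] by simp
  have A1: "AE z in circ. (\<Sum>j<n. (\<omega> * z) ^ j * g j (\<omega> * z)) = 0" if w: "\<omega> \<in> RU n" for \<omega>
    using S circ_AE_rot[OF RU_norm[OF n w] Sm] by simp
  have A2: "AE z in circ. \<forall>j\<in>{..<n}. g j (\<omega> * z) = g j z" if w: "\<omega> \<in> RU n" for \<omega>
    by (rule AE_finite_allI) (use M_inv[OF n _ w] g in auto)
  have "AE z in circ. \<forall>\<omega>\<in>RU n. (\<Sum>j<n. (\<omega> * z) ^ j * g j (\<omega> * z)) = 0 \<and> (\<forall>j\<in>{..<n}. g j (\<omega> * z) = g j z)"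
    by (rule AE_finite_allI[OF RU_finite[OF n]]) (use A1 A2 in \<open>auto intro: AE_conjI\<close>)
  then show "AE z in circ. z ^ i * g i z = 0"
  proof eventually_elim
    case (elim z)
    have e1: "(\<Sum>j<n. \<omega> ^ j * (z ^ j * g j z)) = 0" if w: "\<omega> \<in> RU n" for \<omega>
    proof -
      have s0: "(\<Sum>j<n. (\<omega> * z) ^ j * g j (\<omega> * z)) = 0" using elim w by blast
      have "(\<Sum>j<n. (\<omega> * z) ^ j * g j (\<omega> * z)) = (\<Sum>j<n. \<omega> ^ j * (z ^ j * g j z))"
      proof (rule sum.cong[OF refl])
        fix j assume "j \<in> {..<n}"
        then have "g j (\<omega> * z) = g j z" using elim w by blast
        then show "(\<omega> * z) ^ j * g j (\<omega> * z) = \<omega> ^ j * (z ^ j * g j z)" by (simp add: power_mult_distrib)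
      qed
      then show ?thesis using s0 by simp
    qed
    have "0 = (\<Sum>\<omega>\<in>RU n. \<omega> ^ (n - i) * (\<Sum>j<n. \<omega> ^ j * (z ^ j * g j z)))"
      using e1 by simp
    also have "\<dots> = (\<Sum>j<n. (\<Sum>\<omega>\<in>RU n. \<omega> ^ (n - i + j)) * (z ^ j * g j z))"
      by (simp add: sum_distrib_left sum_distrib_right sum.swap[of _ "RU n"] power_add mult.assoc)
    also have "\<dots> = (\<Sum>j<n. (if i = j then of_nat n * (z ^ j * g j z) else 0))"
    proof (rule sum.cong[OF refl])
      fix j assume "j \<in> {..<n}"
      then have jn: "j < n" by simp
      have "(\<Sum>\<omega>\<in>RU n. \<omega> ^ (n - i + j)) = (if n dvd (n - i + j) then of_nat n else 0)"
        by (rule RU_sum_pow[OF n])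
      also have "\<dots> = (if i = j then of_nat n else 0)" using dvd_shift[OF i jn] by simp
      finally show "(\<Sum>\<omega>\<in>RU n. \<omega> ^ (n - i + j)) * (z ^ j * g j z) = (if i = j then of_nat n * (z ^ j * g j z) else 0)"
        by simp
    qed
    also have "\<dots> = of_nat n * (z ^ i * g i z)" using i by simp
    finally show ?case using n by simp
  qed
qed

end

theorem lemma4p2:
  fixes \<alpha> :: "(complex \<Rightarrow> complex) \<Rightarrow> real" and n :: nat
  assumes "rot_sym_norm \<alpha>" and "continuous_norm \<alpha>" and "n \<ge> 1"
  shows "(\<forall>f\<in>H_alpha \<alpha>. \<exists>g. (\<forall>j<n. g j \<in> M_alpha \<alpha> n) \<and>
            (AE z in circ. f z = (\<Sum>j<n. z ^ j * g j z))) \<and>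
     (\<forall>g. (\<forall>j<n. g j \<in> M_alpha \<alpha> n) \<longrightarrow> (\<lambda>z. \<Sum>j<n. z ^ j * g j z) \<in> H_alpha \<alpha>) \<and>
     (\<forall>g. (\<forall>j<n. g j \<in> M_alpha \<alpha> n) \<and> (AE z in circ. (\<Sum>j<n. z ^ j * g j z) = 0)
            \<longrightarrow> (\<forall>j<n. AE z in circ. z ^ j * g j z = 0))"
proof -
  interpret rsn \<alpha> by unfold_locales (rule assms(1))
  have n: "n \<ge> 1" by (rule assms(3))
  show ?thesis
  proof (intro conjI)
    show "\<forall>f\<in>H_alpha \<alpha>. \<exists>g. (\<forall>j<n. g j \<in> M_alpha \<alpha> n) \<and> (AE z in circ. f z = (\<Sum>j<n. z ^ j * g j z))"
      using part1[OF n] by blast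
    show "\<forall>g. (\<forall>j<n. g j \<in> M_alpha \<alpha> n) \<longrightarrow> (\<lambda>z. \<Sum>j<n. z ^ j * g j z) \<in> H_alpha \<alpha>"
      using part2[OF n] by blast
    show "\<forall>g. (\<forall>j<n. g j \<in> M_alpha \<alpha> n) \<and> (AE z in circ. (\<Sum>j<n. z ^ j * g j z) = 0)
            \<longrightarrow> (\<forall>j<n. AE z in circ. z ^ j * g j z = 0)"
      using part3[OF n] by blast
  qed
qed

end
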